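(* Let $D$ be a bounded domain in $\mathbb{C}^2$ with piecewise smooth Levi-flat boundary and let $S$ be one of its defining hypersurfaces. Let $\hat D$ be a subdomain of $D$ and $g:\hat D\to\mathbb{C}^2$ a holomorphic map with $g(\hat D)\subseteq bD$. If $g(\hat D)\cap S\neq\emptyset$, then $g(\hat D)\subseteq S$.
   Context: A bounded domain $D\subset\mathbb{C}^n$ has piecewise smooth boundary if there are a neighborhood $U$ of $\overline{D}$ and real $\rho_1,\dots,\rho_m\in C^\infty(U)$ with $D=\{q\in U:\rho_k(q)<0,\ 1\le k\le m\}$ and $d\rho_{k_1}\wedge\cdots\wedge d\rho_{k_l}\neq0$ on $S_{k_1}\cap\cdots\cap S_{k_l}$ for distinct indices, where $S_j=\{\rho_j=0\}$; the $S_j$ are the defining hypersurfaces. It is piecewise smooth Levi-flat if each $S_j$ is Levi-flat (its Levi form vanishes on complex tangent vectors). *)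

theory Defs
  imports "HOL-Analysis.Analysis"
begin

fun Ck_on :: "nat \<Rightarrow> 'a::real_normed_vector set \<Rightarrow> ('a \<Rightarrow> 'b::real_normed_vector) \<Rightarrow> bool" where
  "Ck_on 0 U f = continuous_on U f"
| "Ck_on (Suc k) U f =
     (\<exists>f'. (\<forall>x\<in>U. (f has_derivative f' x) (at x)) \<and> (\<forall>v. Ck_on k U (\<lambda>x. f' x v)))"

definition smooth_on :: "'a::real_normed_vector set \<Rightarrow> ('a \<Rightarrow> 'b::real_normed_vector) \<Rightarrow> bool" where
  "smooth_on U f \<longleftrightarrow> (\<forall>k. Ck_on k U f)"

definition wirt_z :: "2 \<Rightarrow> (complex^2 \<Rightarrow> complex) \<Rightarrow> complex^2 \<Rightarrow> complex" where
  "wirt_z j f x = (frechet_derivative f (at x) (axis j 1)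
                   - \<i> * frechet_derivative f (at x) (axis j \<i>)) / 2"

definition wirt_zbar :: "2 \<Rightarrow> (complex^2 \<Rightarrow> complex) \<Rightarrow> complex^2 \<Rightarrow> complex" where
  "wirt_zbar j f x = (frechet_derivative f (at x) (axis j 1)
                   + \<i> * frechet_derivative f (at x) (axis j \<i>)) / 2"

definition complex_tangent :: "(complex^2 \<Rightarrow> real) \<Rightarrow> complex^2 \<Rightarrow> complex^2 \<Rightarrow> bool" where
  "complex_tangent \<rho> p w \<longleftrightarrow>
     (\<Sum>j\<in>UNIV. wirt_z j (\<lambda>q. complex_of_real (\<rho> q)) p * w $ j) = 0"

definition levi_form :: "(complex^2 \<Rightarrow> real) \<Rightarrow> complex^2 \<Rightarrow> complex^2 \<Rightarrow> complex" where
  "levi_form \<rho> p w =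
     (\<Sum>j\<in>UNIV. \<Sum>k\<in>UNIV.
        wirt_z j (wirt_zbar k (\<lambda>q. complex_of_real (\<rho> q))) p * w $ j * cnj (w $ k))"

definition levi_flat :: "(complex^2) set \<Rightarrow> (complex^2 \<Rightarrow> real) \<Rightarrow> bool" where
  "levi_flat U \<rho> \<longleftrightarrow>
     (\<forall>p\<in>U. \<rho> p = 0 \<longrightarrow> (\<forall>w. complex_tangent \<rho> p w \<longrightarrow> levi_form \<rho> p w = 0))"

text \<open>Piecewise smooth Levi-flat boundary, with defining functions rho_0..rho_(m-1) on U.
 The wedge condition d rho_k1 \<and> ... \<and> d rho_kl \<noteq> 0 is linear independence of the differentials.\<close>
definition pw_smooth_levi_flat :: "(complex^2) set \<Rightarrow> (complex^2) set \<Rightarrow> nat \<Rightarrow> (nat \<Rightarrow> complex^2 \<Rightarrow> real) \<Rightarrow> bool" where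
  "pw_smooth_levi_flat D U m \<rho> \<longleftrightarrow>
     open U \<and> closure D \<subseteq> U \<and>
     (\<forall>k<m. smooth_on U (\<rho> k)) \<and>
     D = {q\<in>U. \<forall>k<m. \<rho> k q < 0} \<and>
     (\<forall>K q. K \<subseteq> {..<m} \<and> q \<in> U \<and> (\<forall>k\<in>K. \<rho> k q = 0) \<longrightarrow>
        (\<forall>c::nat\<Rightarrow>real. (\<forall>v. (\<Sum>k\<in>K. c k * frechet_derivative (\<rho> k) (at q) v) = 0)
             \<longrightarrow> (\<forall>k\<in>K. c k = 0))) \<and>
     (\<forall>k<m. levi_flat U (\<rho> k))"

definition holo_map_on :: "(complex^2) set \<Rightarrow> (complex^2 \<Rightarrow> complex^2) \<Rightarrow> bool" where
  "holo_map_on A g \<longleftrightarrow>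
     (\<forall>x\<in>A. \<exists>L. (g has_derivative L) (at x) \<and> (\<forall>c v. L (c *s v) = c *s L v))"

end

theory Submission
  imports Defs "HOL-Complex_Analysis.Cauchy_Integral_Formula"
begin

lemma second_deriv_test:
  fixes f f' :: "real \<Rightarrow> real" and a \<delta> :: real
  assumes "\<delta> > 0"
    and d1: "\<And>t. \<bar>t\<bar> < \<delta> \<Longrightarrow> (f has_real_derivative f' t) (at t)"
    and d2: "(f' has_real_derivative a) (at 0)"
    and mn: "\<And>t. \<bar>t\<bar> < \<delta> \<Longrightarrow> f 0 \<le> f t"
  shows "f' 0 = 0 \<and> a \<ge> 0"
proof -
  have z: "f' 0 = 0"
    using DERIV_local_min[OF d1[of 0] \<open>\<delta>>0\<close>] mn \<open>\<delta>>0\<close> by (auto simp: abs_minus_commute)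
  moreover have "a \<ge> 0"
  proof (rule ccontr)
    assume "\<not> a \<ge> 0"
    then have "a < 0" by simp
    from DERIV_neg_dec_right[OF d2 this] obtain d where d: "d > 0"
      and lt: "\<And>h. h > 0 \<Longrightarrow> h < d \<Longrightarrow> f' (0 + h) < f' 0" by blast
    define e where "e = min d \<delta> / 2"
    have e: "e > 0" "e < d" "e < \<delta>" using d \<open>\<delta>>0\<close> by (auto simp: e_def)
    have "f 0 > f e"
    proof (rule DERIV_neg_imp_decreasing_open[OF e(1)])
      show "\<exists>y. (f has_real_derivative y) (at x) \<and> y < 0" if "0 < x" "x < e" for x
        using lt[of x] d1[of x] z e that by auto
      show "continuous_on {0..e} f"
        by (rule continuous_at_imp_continuous_on)
           (use d1 e in \<open>force intro: DERIV_isCont\<close>)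
    qed
    then show False using mn[of e] e by auto
  qed
  ultimately show ?thesis by simp
qed

lemma dir_min:
  fixes u ux uxx :: "complex \<Rightarrow> real" and e :: complex
  assumes dx: "\<And>\<mu>. \<mu> \<in> S \<Longrightarrow> ((\<lambda>t. u (\<mu> + of_real t * e)) has_real_derivative ux \<mu>) (at 0)"
    and dxx: "\<And>\<mu>. \<mu> \<in> S \<Longrightarrow> ((\<lambda>t. ux (\<mu> + of_real t * e)) has_real_derivative uxx \<mu>) (at 0)"
    and "\<delta> > 0"
    and inS: "\<And>t. \<bar>t\<bar> < \<delta> \<Longrightarrow> z1 + of_real t * e \<in> S"
    and mn: "\<And>t. \<bar>t\<bar> < \<delta> \<Longrightarrow> u z1 \<le> u (z1 + of_real t * e)"
  shows "ux z1 = 0 \<and> uxx z1 \<ge> 0"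
proof -
  have sh: "((\<lambda>s. F (z1 + of_real s * e)) has_real_derivative G (z1 + of_real t * e)) (at t)"
    if "((\<lambda>s. F ((z1 + of_real t * e) + of_real s * e)) has_real_derivative G (z1 + of_real t * e)) (at 0)"
    for F G :: "complex \<Rightarrow> real" and t
  proof -
    have "((\<lambda>s. F (z1 + of_real (s + t) * e)) has_real_derivative G (z1 + of_real t * e)) (at 0)"
      using that by (simp add: algebra_simps)
    then show ?thesis using DERIV_shift[of "\<lambda>s. F (z1 + of_real s * e)" _ 0 t] by simp
  qed
  have "(\<lambda>t. ux (z1 + of_real t * e)) 0 = 0 \<and> uxx z1 \<ge> 0"
  proof (rule second_deriv_test[OF \<open>\<delta>>0\<close>, where f="\<lambda>t. u (z1 + of_real t * e)"])
    show "((\<lambda>t. u (z1 + of_real t * e)) has_real_derivative ux (z1 + of_real t * e)) (at t)"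
      if "\<bar>t\<bar> < \<delta>" for t
      by (rule sh) (use dx[OF inS[OF that]] in simp)
    show "((\<lambda>t. ux (z1 + of_real t * e)) has_real_derivative uxx z1) (at 0)"
      using dxx[OF inS[of 0]] \<open>\<delta>>0\<close> by simp
    show "u (z1 + of_real 0 * e) \<le> u (z1 + of_real t * e)" if "\<bar>t\<bar> < \<delta>" for t
      using mn[OF that] by simp
  qed
  then show ?thesis by simp
qed

definition hE :: "real \<Rightarrow> complex \<Rightarrow> real" where
  "hE a z = exp (- a * ((Re z)\<^sup>2 + (Im z)\<^sup>2))"

lemma hE_pos: "hE a z > 0" by (simp add: hE_def)

lemma hE_x: "((\<lambda>t. hE a (z + of_real t)) has_real_derivative (- 2 * a * Re (z + of_real t) * hE a (z + of_real t))) (at t)"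
  unfolding hE_def
  by (auto intro!: derivative_eq_intros simp: algebra_simps power2_eq_square)

lemma hE_y: "((\<lambda>t. hE a (z + of_real t * \<i>)) has_real_derivative (- 2 * a * Im (z + of_real t * \<i>) * hE a (z + of_real t * \<i>))) (at t)"
  unfolding hE_def
  by (auto intro!: derivative_eq_intros simp: algebra_simps power2_eq_square)


lemma hE_xx: "((\<lambda>t. - 2 * a * Re (z + of_real t) * hE a (z + of_real t)) has_real_derivative
   ((4 * a\<^sup>2 * (Re z)\<^sup>2 - 2 * a) * hE a z)) (at 0)"
proof -
  have A: "((\<lambda>t. (- 2 * a * (Re z + t))) has_real_derivative (- 2 * a)) (at 0)"
    by (auto intro!: derivative_eq_intros)
  note DERIV_mult[OF A hE_x[of a z 0]]
  then show ?thesis by (simp add: algebra_simps power2_eq_square)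
qed

lemma hE_yy: "((\<lambda>t. - 2 * a * Im (z + of_real t * \<i>) * hE a (z + of_real t * \<i>)) has_real_derivative
   ((4 * a\<^sup>2 * (Im z)\<^sup>2 - 2 * a) * hE a z)) (at 0)"
proof -
  have A: "((\<lambda>t. (- 2 * a * (Im z + t))) has_real_derivative (- 2 * a)) (at 0)"
    by (auto intro!: derivative_eq_intros)
  note DERIV_mult[OF A hE_y[of a z 0]]
  then show ?thesis by (simp add: algebra_simps power2_eq_square)
qed

lemma hE_cont: "continuous_on S (hE a)"
  unfolding hE_def by (intro continuous_intros)

lemma hE_le1: "a \<ge> 0 \<Longrightarrow> hE a z \<le> 1"
  unfolding hE_def by (simp add: mult_nonneg_nonneg)

lemma hE_norm: "hE a z = exp (- a * (cmod z)\<^sup>2)"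
  unfolding hE_def by (simp add: cmod_power2)


lemma hE_x0: "((\<lambda>t. hE a (z + of_real t)) has_real_derivative (- 2 * a * Re z * hE a z)) (at 0)"
  using hE_x[of a z 0] by simp
lemma hE_y0: "((\<lambda>t. hE a (z + of_real t * \<i>)) has_real_derivative (- 2 * a * Im z * hE a z)) (at 0)"
  using hE_y[of a z 0] by simp

lemma compact_annulus: "compact {z::complex. r1 \<le> cmod z \<and> cmod z \<le> r2}"
proof -
  have "bounded {z::complex. r1 \<le> cmod z \<and> cmod z \<le> r2}"
    by (rule bounded_subset[OF bounded_cball[of 0 r2]]) auto
  moreover have "closed {z::complex. r1 \<le> cmod z \<and> cmod z \<le> r2}"
    by (intro closed_Collect_conj closed_Collect_le continuous_intros)
  ultimately show ?thesis using compact_eq_bounded_closed by blast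
qed

lemma norm_add_t: "cmod (z + of_real t * e) \<le> cmod z + \<bar>t\<bar>" "cmod z - \<bar>t\<bar> \<le> cmod (z + of_real t * e)"
  if "cmod e = 1" for z e :: complex and t :: real
proof -
  have n: "cmod (of_real t * e) = \<bar>t\<bar>" using that by (simp add: norm_mult)
  show "cmod (z + of_real t * e) \<le> cmod z + \<bar>t\<bar>" using norm_triangle_ineq[of z "of_real t * e"] n by simp
  show "cmod z - \<bar>t\<bar> \<le> cmod (z + of_real t * e)" using norm_diff_ineq[of z "of_real t * e"] n by simp
qed

lemma hopf:
  fixes u ux uy uxx uyy :: "complex \<Rightarrow> real" and C :: real
  assumes C: "C \<ge> 0"
    and cont: "continuous_on (ball 0 2) u"
    and nonneg: "\<forall>z\<in>ball 0 2. u z \<ge> 0"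
    and pos: "\<forall>z\<in>ball 0 1. u z > 0"
    and u1: "u 1 = 0"
    and dx: "\<forall>z\<in>ball 0 2. ((\<lambda>t. u (z + of_real t)) has_real_derivative ux z) (at 0)"
    and dxx: "\<forall>z\<in>ball 0 2. ((\<lambda>t. ux (z + of_real t)) has_real_derivative uxx z) (at 0)"
    and dy: "\<forall>z\<in>ball 0 2. ((\<lambda>t. u (z + of_real t * \<i>)) has_real_derivative uy z) (at 0)"
    and dyy: "\<forall>z\<in>ball 0 2. ((\<lambda>t. uy (z + of_real t * \<i>)) has_real_derivative uyy z) (at 0)"
    and ineq: "\<forall>z\<in>ball 0 2. uxx z + uyy z \<le> C * u z + C * (\<bar>ux z\<bar> + \<bar>uy z\<bar>)"
  shows False
proof -
  define a where "a = 5 + 5 * C"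
  have a: "a \<ge> 5" using C by (simp add: a_def)
  define h where "h z = hE a z - exp (- a)" for z
  define hx where "hx z = - 2 * a * Re z * hE a z" for z
  define hy where "hy z = - 2 * a * Im z * hE a z" for z
  define hxx where "hxx z = (4 * a\<^sup>2 * (Re z)\<^sup>2 - 2 * a) * hE a z" for z
  define hyy where "hyy z = (4 * a\<^sup>2 * (Im z)\<^sup>2 - 2 * a) * hE a z" for z
  define A where "A = {z::complex. 1/2 \<le> cmod z \<and> cmod z \<le> 1}"
  have cA: "compact A" unfolding A_def by (rule compact_annulus)
  have A2: "A \<subseteq> ball 0 2" by (auto simp: A_def)
  have h_le: "h z < 1" for z
  proof -
    have "exp (- a) > 0" by simp
    then show ?thesis using hE_le1[of a z] a unfolding h_def by linarith
  qed
  have h_1: "h z = 0" if "cmod z = 1" for z using that by (simp add: h_def hE_norm)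
  have cs: "compact (sphere (0::complex) (1/2))" by simp
  obtain zm where zm: "zm \<in> sphere 0 (1/2)" and zmin: "\<And>z. z \<in> sphere 0 (1/2) \<Longrightarrow> u zm \<le> u z"
    using continuous_attains_inf[OF cs _ continuous_on_subset[OF cont]] by force
  define m where "m = u zm"
  have m: "m > 0" using pos zm by (auto simp: m_def)
  define \<epsilon> where "\<epsilon> = m / 2"
  have \<epsilon>: "\<epsilon> > 0" by (simp add: \<epsilon>_def m)
  define w where "w z = u z - \<epsilon> * h z" for z
  have wdx: "((\<lambda>t. w (z + of_real t * 1)) has_real_derivative (ux z - \<epsilon> * hx z)) (at 0)" if "z \<in> ball 0 2" for z
  proof -
    have "((\<lambda>t. u (z + of_real t) - \<epsilon> * (hE a (z + of_real t) - exp (- a))) has_real_derivative (ux z - \<epsilon> * (- 2 * a * Re z * hE a z - 0))) (at 0)"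
      by (intro DERIV_diff DERIV_cmult hE_x0 DERIV_const) (use dx that in auto)
    then show ?thesis by (simp add: w_def h_def hx_def)
  qed
  have wdy: "((\<lambda>t. w (z + of_real t * \<i>)) has_real_derivative (uy z - \<epsilon> * hy z)) (at 0)" if "z \<in> ball 0 2" for z
  proof -
    have "((\<lambda>t. u (z + of_real t * \<i>) - \<epsilon> * (hE a (z + of_real t * \<i>) - exp (- a))) has_real_derivative (uy z - \<epsilon> * (- 2 * a * Im z * hE a z - 0))) (at 0)"
      by (intro DERIV_diff DERIV_cmult hE_y0 DERIV_const) (use dy that in auto)
    then show ?thesis by (simp add: w_def h_def hy_def)
  qed
  have wdxx: "((\<lambda>t. ux (z + of_real t * 1) - \<epsilon> * hx (z + of_real t * 1)) has_real_derivative (uxx z - \<epsilon> * hxx z)) (at 0)" if "z \<in> ball 0 2" for z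
  proof -
    have "((\<lambda>t. ux (z + of_real t) - \<epsilon> * (- 2 * a * Re (z + of_real t) * hE a (z + of_real t))) has_real_derivative (uxx z - \<epsilon> * ((4 * a\<^sup>2 * (Re z)\<^sup>2 - 2 * a) * hE a z))) (at 0)"
      by (intro DERIV_diff DERIV_cmult hE_xx) (use dxx that in auto)
    then show ?thesis by (simp add: hx_def hxx_def)
  qed
  have wdyy: "((\<lambda>t. uy (z + of_real t * \<i>) - \<epsilon> * hy (z + of_real t * \<i>)) has_real_derivative (uyy z - \<epsilon> * hyy z)) (at 0)" if "z \<in> ball 0 2" for z
  proof -
    have "((\<lambda>t. uy (z + of_real t * \<i>) - \<epsilon> * (- 2 * a * Im (z + of_real t * \<i>) * hE a (z + of_real t * \<i>))) has_real_derivative (uyy z - \<epsilon> * ((4 * a\<^sup>2 * (Im z)\<^sup>2 - 2 * a) * hE a z))) (at 0)"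
      by (intro DERIV_diff DERIV_cmult hE_yy) (use dyy that in auto)
    then show ?thesis by (simp add: hy_def hyy_def)
  qed
  have wcont: "continuous_on A w"
    unfolding w_def h_def
    by (intro continuous_intros continuous_on_subset[OF cont A2] hE_cont)
  have wA: "\<forall>z\<in>A. w z \<ge> 0"
  proof (rule ccontr)
    assume "\<not> (\<forall>z\<in>A. w z \<ge> 0)"
    then obtain z0 where "z0 \<in> A" "w z0 < 0" by auto
    obtain z1 where z1: "z1 \<in> A" and z1min: "\<And>z. z \<in> A \<Longrightarrow> w z1 \<le> w z"
      using continuous_attains_inf[OF cA _ wcont] \<open>z0 \<in> A\<close> by blast
    have wz1: "w z1 < 0" using z1min[OF \<open>z0 \<in> A\<close>] \<open>w z0 < 0\<close> by simp
    have n1: "cmod z1 \<noteq> 1/2"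
    proof
      assume "cmod z1 = 1/2"
      then have "u z1 \<ge> m" using zmin[of z1] by (simp add: m_def)
      moreover have "\<epsilon> * h z1 < \<epsilon>" using h_le[of z1] \<epsilon> by simp
      ultimately show False using wz1 m unfolding w_def \<epsilon>_def by linarith
    qed
    have n2: "cmod z1 \<noteq> 1"
    proof
      assume "cmod z1 = 1"
      then show False using wz1 h_1[of z1] nonneg A2 z1 by (force simp: w_def)
    qed
    have r: "1/2 < cmod z1" "cmod z1 < 1" using z1 n1 n2 by (auto simp: A_def)
    define \<delta> where "\<delta> = min (cmod z1 - 1/2) (1 - cmod z1)"
    have \<delta>: "\<delta> > 0" using r by (simp add: \<delta>_def)
    have inA: "z1 + of_real t * e \<in> A" if "\<bar>t\<bar> < \<delta>" "cmod e = 1" for t e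
      using norm_add_t[OF that(2), of z1 t] that(1) by (auto simp: A_def \<delta>_def)
    have inB: "z1 + of_real t * e \<in> ball 0 2" if "\<bar>t\<bar> < \<delta>" "cmod e = 1" for t e
      using inA[OF that] A2 by blast
    have X: "ux z1 - \<epsilon> * hx z1 = 0 \<and> uxx z1 - \<epsilon> * hxx z1 \<ge> 0"
      apply (rule dir_min[where S="ball 0 2" and e=1, OF wdx wdxx \<delta>])
      using inA[of _ 1] inB[of _ 1] z1min by auto
    have Y: "uy z1 - \<epsilon> * hy z1 = 0 \<and> uyy z1 - \<epsilon> * hyy z1 \<ge> 0"
      apply (rule dir_min[where S="ball 0 2" and e=\<i>, OF wdy wdyy \<delta>])
      using inA[of _ \<i>] inB[of _ \<i>] z1min by auto
    have z1b: "z1 \<in> ball 0 2" using z1 A2 by auto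
    define E where "E = hE a z1"
    have E: "E > 0" by (simp add: E_def hE_pos)
    define x where "x = Re z1"
    define y where "y = Im z1"
    have r2: "1/4 < x\<^sup>2 + y\<^sup>2" "x\<^sup>2 + y\<^sup>2 < 1"
    proof -
      have "(cmod z1)\<^sup>2 = x\<^sup>2 + y\<^sup>2" by (simp add: x_def y_def cmod_power2)
      moreover have "(1/2)\<^sup>2 < (cmod z1)\<^sup>2" "(cmod z1)\<^sup>2 < 1\<^sup>2"
        using power_strict_mono[OF r(1), of 2] power_strict_mono[OF r(2), of 2] by auto
      ultimately show "1/4 < x\<^sup>2 + y\<^sup>2" "x\<^sup>2 + y\<^sup>2 < 1" by (auto simp: power2_eq_square)
    qed
    have "x\<^sup>2 < 1" "y\<^sup>2 < 1" using r2 zero_le_power2[of x] zero_le_power2[of y] by linarith+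
    then have xy: "\<bar>x\<bar> \<le> 1" "\<bar>y\<bar> \<le> 1" by (auto simp: abs_square_less_1 less_imp_le)
    have key1: "\<epsilon> * (hxx z1 + hyy z1) \<le> C * (\<epsilon> * h z1) + C * (\<epsilon> * (\<bar>hx z1\<bar> + \<bar>hy z1\<bar>))"
    proof -
      have "\<epsilon> * (hxx z1 + hyy z1) \<le> uxx z1 + uyy z1" using X Y by (simp add: algebra_simps)
      also have "\<dots> \<le> C * u z1 + C * (\<bar>ux z1\<bar> + \<bar>uy z1\<bar>)" using ineq z1b by auto
      also have "\<dots> \<le> C * (\<epsilon> * h z1) + C * (\<epsilon> * (\<bar>hx z1\<bar> + \<bar>hy z1\<bar>))"
      proof -
        have "u z1 \<le> \<epsilon> * h z1" using wz1 by (simp add: w_def)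
        moreover have "\<bar>ux z1\<bar> = \<epsilon> * \<bar>hx z1\<bar>" "\<bar>uy z1\<bar> = \<epsilon> * \<bar>hy z1\<bar>" using X Y \<epsilon> by (auto simp: abs_mult)
        ultimately show ?thesis using C by (simp add: distrib_left mult_left_mono algebra_simps)
      qed
      finally show ?thesis .
    qed
    have key2: "hxx z1 + hyy z1 \<le> C * h z1 + C * (\<bar>hx z1\<bar> + \<bar>hy z1\<bar>)"
    proof -
      have "\<epsilon> * (hxx z1 + hyy z1) \<le> \<epsilon> * (C * h z1 + C * (\<bar>hx z1\<bar> + \<bar>hy z1\<bar>))"
        using key1 by (simp add: algebra_simps)
      then show ?thesis using \<epsilon> by (simp add: mult_le_cancel_left_pos)
    qed
    have hh: "h z1 \<le> E" by (simp add: h_def E_def)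
    have hxy: "\<bar>hx z1\<bar> + \<bar>hy z1\<bar> \<le> 4 * a * E"
    proof -
      have "\<bar>hx z1\<bar> = 2 * a * \<bar>x\<bar> * E" "\<bar>hy z1\<bar> = 2 * a * \<bar>y\<bar> * E"
        using a E by (auto simp: hx_def hy_def x_def y_def E_def abs_mult)
      moreover have "2 * a * \<bar>x\<bar> * E \<le> 2 * a * 1 * E" "2 * a * \<bar>y\<bar> * E \<le> 2 * a * 1 * E"
        using xy a E by (auto intro!: mult_right_mono mult_left_mono)
      ultimately show ?thesis by simp
    qed
    have lhs: "hxx z1 + hyy z1 = (4 * a\<^sup>2 * (x\<^sup>2 + y\<^sup>2) - 4 * a) * E"
      by (simp add: hxx_def hyy_def x_def y_def E_def algebra_simps)
    have "(4 * a\<^sup>2 * (x\<^sup>2 + y\<^sup>2) - 4 * a) * E \<le> (C + C * 4 * a) * E"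
    proof -
      have "C * h z1 \<le> C * E" using hh C by (rule mult_left_mono)
      moreover have "C * (\<bar>hx z1\<bar> + \<bar>hy z1\<bar>) \<le> C * (4 * a * E)" using hxy C by (rule mult_left_mono)
      ultimately show ?thesis using key2 lhs by (simp add: algebra_simps)
    qed
    then have "4 * a\<^sup>2 * (x\<^sup>2 + y\<^sup>2) - 4 * a \<le> C + C * 4 * a" using E by simp
    moreover have "a\<^sup>2 \<le> 4 * a\<^sup>2 * (x\<^sup>2 + y\<^sup>2)"
    proof -
      have "a\<^sup>2 * 1 \<le> a\<^sup>2 * (4 * (x\<^sup>2 + y\<^sup>2))" using r2 by (intro mult_left_mono) auto
      then show ?thesis by (simp add: algebra_simps)
    qed
    moreover have "a\<^sup>2 = 5 * a + 5 * C * a" by (simp add: a_def power2_eq_square algebra_simps)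
    moreover have "C * a \<ge> C * 1" using C a by (intro mult_left_mono) auto
    ultimately show False using a C by (simp add: algebra_simps)
  qed
  have ux1: "ux 1 = 0 \<and> uxx 1 \<ge> 0"
  proof (rule dir_min[where S="ball 0 2" and e=1 and \<delta>=1 and u=u and ux=ux and uxx=uxx])
    show "((\<lambda>t. u (\<mu> + of_real t * 1)) has_real_derivative ux \<mu>) (at 0)" if "\<mu> \<in> ball 0 2" for \<mu>
      using dx that by simp
    show "((\<lambda>t. ux (\<mu> + of_real t * 1)) has_real_derivative uxx \<mu>) (at 0)" if "\<mu> \<in> ball 0 2" for \<mu>
      using dxx that by simp
    show "1 + of_real t * 1 \<in> ball (0::complex) 2" if "\<bar>t\<bar> < 1" for t
      using norm_add_t(1)[of 1 1 t] that by simp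
    then show "u 1 \<le> u (1 + of_real t * 1)" if "\<bar>t\<bar> < 1" for t
      using nonneg u1 that by simp
  qed simp
  have w1: "w 1 = 0" using u1 h_1[of 1] by (simp add: w_def)
  have d1: "((\<lambda>t. w (1 + of_real t)) has_real_derivative (\<epsilon> * 2 * a * exp (- a))) (at 0)"
    using wdx[of 1] ux1 by (simp add: hx_def hE_norm mult.assoc)
  have "\<epsilon> * 2 * a * exp (- a) > 0" using \<epsilon> a by simp
  from DERIV_pos_inc_left[OF d1 this] obtain d where d: "d > 0"
    and lt: "\<And>h. h > 0 \<Longrightarrow> h < d \<Longrightarrow> w (1 + of_real (0 - h)) < w (1 + of_real 0)" by blast
  define h0 where "h0 = min d (1/2) / 2"
  have h0: "h0 > 0" "h0 < d" "h0 < 1/2" using d by (auto simp: h0_def)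
  have "1 + of_real (0 - h0) = complex_of_real (1 - h0)" by simp
  then have "1 + of_real (0 - h0) \<in> A" using h0 by (simp add: A_def del: of_real_diff)
  then have "w (1 + of_real (0 - h0)) \<ge> 0" using wA by blast
  then show False using lt[OF h0(1,2)] w1 by simp
qed


definition C1 :: "'a::real_normed_vector set \<Rightarrow> ('a \<Rightarrow> real) \<Rightarrow> bool" where
  "C1 U f \<longleftrightarrow> (\<exists>f'. (\<forall>x\<in>U. (f has_derivative f' x) (at x)) \<and> (\<forall>v. continuous_on U (\<lambda>x. f' x v)))"

lemma C1_cont: "C1 U f \<Longrightarrow> continuous_on U f"
  unfolding C1_def
  by (metis continuous_at_imp_continuous_on has_derivative_continuous)

lemma C1_const: "C1 U (\<lambda>x. c)"
  unfolding C1_def by (rule exI[of _ "\<lambda>x v. 0"]) auto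

lemma C1_add:
  fixes f g :: "'a::real_normed_vector \<Rightarrow> real"
  assumes "C1 U f" "C1 U g" shows "C1 U (\<lambda>x. f x + g x)"
proof -
  obtain f' where f: "\<forall>x\<in>U. (f has_derivative f' x) (at x)" "\<forall>v. continuous_on U (\<lambda>x. f' x v)" using assms(1) unfolding C1_def by auto
  obtain g' where g: "\<forall>x\<in>U. (g has_derivative g' x) (at x)" "\<forall>v. continuous_on U (\<lambda>x. g' x v)" using assms(2) unfolding C1_def by auto
  show ?thesis unfolding C1_def
    by (rule exI[of _ "\<lambda>x v. f' x v + g' x v"]) (use f g in \<open>auto intro!: has_derivative_add continuous_intros\<close>)
qed

lemma C1_mult:
  fixes f g :: "'a::real_normed_vector \<Rightarrow> real"
  assumes "C1 U f" "C1 U g" shows "C1 U (\<lambda>x. f x * g x)"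
proof -
  have cf: "continuous_on U f" "continuous_on U g" using assms C1_cont by auto
  obtain f' where f: "\<forall>x\<in>U. (f has_derivative f' x) (at x)" "\<forall>v. continuous_on U (\<lambda>x. f' x v)" using assms(1) unfolding C1_def by auto
  obtain g' where g: "\<forall>x\<in>U. (g has_derivative g' x) (at x)" "\<forall>v. continuous_on U (\<lambda>x. g' x v)" using assms(2) unfolding C1_def by auto
  show ?thesis unfolding C1_def
    by (rule exI[of _ "\<lambda>x v. f x * g' x v + f' x v * g x"]) (use f g cf in \<open>auto intro!: has_derivative_mult continuous_intros\<close>)
qed

lemma C1_cmult: "C1 U f \<Longrightarrow> C1 U (\<lambda>x. c * f x)" for f :: "'a::real_normed_vector \<Rightarrow> real"
  using C1_mult[OF C1_const] by blast

lemma C1_minus: "C1 U f \<Longrightarrow> C1 U (\<lambda>x. - f x)" for f :: "'a::real_normed_vector \<Rightarrow> real"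
  using C1_cmult[of U f "-1"] by simp

lemma C1_diff: "C1 U f \<Longrightarrow> C1 U g \<Longrightarrow> C1 U (\<lambda>x. f x - g x)" for f g :: "'a::real_normed_vector \<Rightarrow> real"
  using C1_add[OF _ C1_minus] by fastforce

lemma C1_sum: "finite I \<Longrightarrow> (\<And>i. i \<in> I \<Longrightarrow> C1 U (f i)) \<Longrightarrow> C1 U (\<lambda>x. \<Sum>i\<in>I. f i x)"
  for f :: "'i \<Rightarrow> 'a::real_normed_vector \<Rightarrow> real"
  by (induction I rule: finite_induct) (auto intro: C1_const C1_add)

lemma choice2: "(\<forall>v. \<exists>y. P v y) \<Longrightarrow> \<exists>F. \<forall>v. P v (F v)" by metis

locale sm =
  fixes U :: "(complex^2) set" and \<rho> :: "complex^2 \<Rightarrow> real"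
    and D :: "complex^2 \<Rightarrow> complex^2 \<Rightarrow> real"
    and H :: "complex^2 \<Rightarrow> complex^2 \<Rightarrow> complex^2 \<Rightarrow> real"
    and T :: "complex^2 \<Rightarrow> complex^2 \<Rightarrow> complex^2 \<Rightarrow> complex^2 \<Rightarrow> real"
  assumes openU: "open U"
    and dD: "\<And>x. x \<in> U \<Longrightarrow> (\<rho> has_derivative D x) (at x)"
    and dH: "\<And>x v. x \<in> U \<Longrightarrow> ((\<lambda>x. D x v) has_derivative H x v) (at x)"
    and dT: "\<And>x v u. x \<in> U \<Longrightarrow> ((\<lambda>x. H x v u) has_derivative T x v u) (at x)"
    and cT: "\<And>v u t. continuous_on U (\<lambda>x. T x v u t)"

lemma sm_exists:
  assumes "open U" "smooth_on U \<rho>"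
  shows "\<exists>D H T. sm U \<rho> D H T"
proof -
  have "Ck_on (Suc (Suc (Suc 0))) U \<rho>" using assms(2) unfolding smooth_on_def by blast
  from iffD1[OF Ck_on.simps(2) this] obtain f1 where f1: "\<forall>x\<in>U. (\<rho> has_derivative f1 x) (at x)"
    and f1': "\<forall>v. Ck_on (Suc (Suc 0)) U (\<lambda>x. f1 x v)" by blast
  have "\<forall>v. \<exists>f2. (\<forall>x\<in>U. ((\<lambda>x. f1 x v) has_derivative f2 x) (at x)) \<and> (\<forall>u. Ck_on (Suc 0) U (\<lambda>x. f2 x u))"
    using f1' iffD1[OF Ck_on.simps(2)] by blast
  then obtain f2 where f2: "\<And>v. \<forall>x\<in>U. ((\<lambda>x. f1 x v) has_derivative f2 v x) (at x)"
    and f2': "\<And>v u. Ck_on (Suc 0) U (\<lambda>x. f2 v x u)" by (metis choice2)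
  have "\<forall>v u. \<exists>f3. (\<forall>x\<in>U. ((\<lambda>x. f2 v x u) has_derivative f3 x) (at x)) \<and> (\<forall>t. continuous_on U (\<lambda>x. f3 x t))"
    using f2' by simp
  then obtain f3 where f3: "\<And>v u. \<forall>x\<in>U. ((\<lambda>x. f2 v x u) has_derivative f3 v u x) (at x)"
    and f3': "\<And>v u t. continuous_on U (\<lambda>x. f3 v u x t)" by metis
  show ?thesis
    apply (rule exI[of _ f1], rule exI[of _ "\<lambda>x v. f2 v x"], rule exI[of _ "\<lambda>x v u. f3 v u x"])
    apply unfold_locales
    using assms f1 f2 f3 f3' by auto
qed

context sm begin

lemma cont_rho: "continuous_on U \<rho>"
  by (metis continuous_at_imp_continuous_on has_derivative_continuous dD)
lemma cont_D: "continuous_on U (\<lambda>x. D x v)"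
  by (metis (no_types, lifting) continuous_at_imp_continuous_on has_derivative_continuous dH)
lemma cont_H: "continuous_on U (\<lambda>x. H x v u)"
  by (metis (no_types, lifting) continuous_at_imp_continuous_on has_derivative_continuous dT)

lemma lin_D: "x \<in> U \<Longrightarrow> bounded_linear (D x)"
  using dD has_derivative_bounded_linear by blast
lemma lin_H: "x \<in> U \<Longrightarrow> bounded_linear (H x v)"
  using dH has_derivative_bounded_linear by blast

lemma H_add1: assumes "x \<in> U" shows "H x (a + b) = (\<lambda>u. H x a u + H x b u)"
proof -
  have "((\<lambda>x. D x (a + b)) has_derivative (\<lambda>u. H x a u + H x b u)) (at x)"
  proof -
    have "((\<lambda>x. D x a + D x b) has_derivative (\<lambda>u. H x a u + H x b u)) (at x)"
      by (intro has_derivative_add dH assms)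
    moreover have "D y a + D y b = D y (a + b)" if "y \<in> U" for y
      using lin_D[OF that] by (simp add: linear_simps)
    ultimately show ?thesis
      by (rule has_derivative_transform_within_open[OF _ openU assms])
  qed
  then show ?thesis using dH[OF assms, of "a+b"] has_derivative_unique by blast
qed

lemma H_scale1: assumes "x \<in> U" shows "H x (c *\<^sub>R a) = (\<lambda>u. c * H x a u)"
proof -
  have "((\<lambda>x. D x (c *\<^sub>R a)) has_derivative (\<lambda>u. c * H x a u)) (at x)"
  proof -
    have "((\<lambda>x. c * D x a) has_derivative (\<lambda>u. c * H x a u)) (at x)"
      by (intro has_derivative_mult_right dH assms)
    moreover have "c * D y a = D y (c *\<^sub>R a)" if "y \<in> U" for y
      using lin_D[OF that] by (simp add: linear_simps)
    ultimately show ?thesis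
      by (rule has_derivative_transform_within_open[OF _ openU assms])
  qed
  then show ?thesis using dH[OF assms, of "c *\<^sub>R a"] has_derivative_unique by blast
qed

lemma C1_D: "C1 U (\<lambda>x. D x v)"
  unfolding C1_def using dH cont_H by (intro exI[of _ "\<lambda>x. H x v"]) blast
lemma C1_H: "C1 U (\<lambda>x. H x v u)"
  unfolding C1_def using dT cT by (intro exI[of _ "\<lambda>x. T x v u"]) blast

end

lemma vec2_expand: "(w::complex^2) = Re (w$1) *\<^sub>R axis 1 1 + Im (w$1) *\<^sub>R axis 1 \<i> + Re (w$2) *\<^sub>R axis 2 1 + Im (w$2) *\<^sub>R axis 2 \<i>"
  by (simp add: vec_eq_iff forall_2 axis_def complex_eq_iff)

lemma lin_expand:
  assumes "linear L"
  shows "L (w::complex^2) = Re (w$1) *\<^sub>R L (axis 1 1) + Im (w$1) *\<^sub>R L (axis 1 \<i>) + Re (w$2) *\<^sub>R L (axis 2 1) + Im (w$2) *\<^sub>R L (axis 2 \<i>)"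
proof -
  interpret linear L by fact
  show ?thesis by (subst vec2_expand) (simp add: add scale)
qed

lemma ii_comp: "(\<i> *s (w::complex^2)) $ j = \<i> * w $ j" by simp

lemma L1:
  fixes X :: "complex^2 \<Rightarrow> complex"
  assumes "linear X"
  shows "(\<Sum>j\<in>UNIV. (X (axis j 1) - \<i> * X (axis j \<i>)) * w$j) = X w - \<i> * X (\<i> *s w)"
  using lin_expand[OF assms, of w] lin_expand[OF assms, of "\<i> *s w"]
  by (simp add: sum_2 complex_eq_iff scaleR_conv_of_real algebra_simps)

lemma L2:
  fixes Y :: "complex^2 \<Rightarrow> complex"
  assumes "linear Y"
  shows "(\<Sum>k\<in>UNIV. cnj (w$k) * (Y (axis k 1) + \<i> * Y (axis k \<i>))) = Y w + \<i> * Y (\<i> *s w)"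
  using lin_expand[OF assms, of w] lin_expand[OF assms, of "\<i> *s w"]
  by (simp add: sum_2 complex_eq_iff scaleR_conv_of_real algebra_simps)


context sm begin

lemma F1: "x \<in> U \<Longrightarrow> frechet_derivative (\<lambda>q. complex_of_real (\<rho> q)) (at x) = (\<lambda>v. complex_of_real (D x v))"
  by (rule frechet_derivative_at[symmetric]) (auto intro!: derivative_eq_intros dD)

lemma F2: "x \<in> U \<Longrightarrow> wirt_z j (\<lambda>q. complex_of_real (\<rho> q)) x = (of_real (D x (axis j 1)) - \<i> * of_real (D x (axis j \<i>))) / 2"
  by (simp add: wirt_z_def F1)

lemma F2b: "x \<in> U \<Longrightarrow> wirt_zbar j (\<lambda>q. complex_of_real (\<rho> q)) x = (of_real (D x (axis j 1)) + \<i> * of_real (D x (axis j \<i>))) / 2"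
  by (simp add: wirt_zbar_def F1)

lemma linD_c: "x \<in> U \<Longrightarrow> linear (\<lambda>v. complex_of_real (D x v))"
  using lin_D[of x] unfolding bounded_linear_def linear_iff
  by (simp add: scaleR_conv_of_real linear_simps)

lemma F3: assumes "x \<in> U" shows "complex_tangent \<rho> x w \<longleftrightarrow> D x w = 0 \<and> D x (\<i> *s w) = 0"
proof -
  have "complex_tangent \<rho> x w \<longleftrightarrow> (\<Sum>j\<in>UNIV. (of_real (D x (axis j 1)) - \<i> * of_real (D x (axis j \<i>))) * w$j) = 0"
    unfolding complex_tangent_def F2[OF assms]
    by (simp add: sum_divide_distrib[symmetric])
  also have "\<dots> \<longleftrightarrow> of_real (D x w) - \<i> * of_real (D x (\<i> *s w)) = 0"
    using L1[OF linD_c[OF assms], of w] by simp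
  also have "\<dots> \<longleftrightarrow> D x w = 0 \<and> D x (\<i> *s w) = 0"
    by (simp add: complex_eq_iff)
  finally show ?thesis .
qed

lemma F4: assumes "p \<in> U"
  shows "frechet_derivative (wirt_zbar k (\<lambda>q. complex_of_real (\<rho> q))) (at p)
       = (\<lambda>u. (of_real (H p (axis k 1) u) + \<i> * of_real (H p (axis k \<i>) u)) / 2)"
proof -
  have d: "((\<lambda>x. (of_real (D x (axis k 1)) + \<i> * of_real (D x (axis k \<i>))) / 2) has_derivative
      (\<lambda>u. (of_real (H p (axis k 1) u) + \<i> * of_real (H p (axis k \<i>) u)) / 2)) (at p)"
    by (auto intro!: derivative_eq_intros dH assms)
  have "frechet_derivative (wirt_zbar k (\<lambda>q. complex_of_real (\<rho> q))) (at p)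
      = frechet_derivative (\<lambda>x. (of_real (D x (axis k 1)) + \<i> * of_real (D x (axis k \<i>))) / 2) (at p)"
    by (rule frechet_derivative_transform_within_open[symmetric, OF _ openU assms])
       (use d F2b in \<open>auto simp: differentiable_def\<close>)
  also have "\<dots> = (\<lambda>u. (of_real (H p (axis k 1) u) + \<i> * of_real (H p (axis k \<i>) u)) / 2)"
    using frechet_derivative_at[OF d] by simp
  finally show ?thesis .
qed

lemma linH_c: "x \<in> U \<Longrightarrow> linear (\<lambda>u. complex_of_real (H x v u))"
  using lin_H[of x v] unfolding bounded_linear_def linear_iff
  by (simp add: scaleR_conv_of_real linear_simps)

lemma linH1_c: assumes "x \<in> U" shows "linear (\<lambda>v. complex_of_real (H x v a) - \<i> * complex_of_real (H x v b))"
  apply (rule linearI)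
   apply (simp add: H_add1[OF assms] algebra_simps)
  apply (simp add: H_scale1[OF assms])
  apply (simp add: scaleR_conv_of_real algebra_simps)
  done

lemma H_add2: "x \<in> U \<Longrightarrow> H x v (a + b) = H x v a + H x v b"
  using lin_H[of x v] by (simp add: linear_simps)
lemma H_scale2: "x \<in> U \<Longrightarrow> H x v (c *\<^sub>R a) = c * H x v a"
  using lin_H[of x v] by (simp add: linear_simps)
lemma D_add: "x \<in> U \<Longrightarrow> D x (a + b) = D x a + D x b"
  using lin_D[of x] by (simp add: linear_simps)
lemma D_scale: "x \<in> U \<Longrightarrow> D x (c *\<^sub>R a) = c * D x a"
  using lin_D[of x] by (simp add: linear_simps)

lemma F5: assumes "p \<in> U"
  shows "Re (levi_form \<rho> p w) = (H p w w + H p (\<i> *s w) (\<i> *s w)) / 4"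
proof -
  define F where "F k u = (of_real (H p (axis k 1) u) + \<i> * of_real (H p (axis k \<i>) u)) / 2" for k u
  define Y where "Y v = complex_of_real (H p v w) - \<i> * complex_of_real (H p v (\<i> *s w))" for v
  have linF: "linear (F k)" for k
    apply (rule linearI)
     apply (simp add: F_def H_add2[OF assms] field_simps)
    apply (simp add: F_def H_scale2[OF assms])
    apply (simp add: scaleR_conv_of_real field_simps)
    done
  have A: "levi_form \<rho> p w = (\<Sum>k\<in>UNIV. cnj (w$k) * (\<Sum>j\<in>UNIV. (F k (axis j 1) - \<i> * F k (axis j \<i>)) * w$j)) / 2"
    by (simp add: levi_form_def wirt_z_def F4[OF assms] F_def[symmetric] sum_2 field_simps)
  have B: "(\<Sum>j\<in>UNIV. (F k (axis j 1) - \<i> * F k (axis j \<i>)) * w$j) = (Y (axis k 1) + \<i> * Y (axis k \<i>)) / 2" for k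
    unfolding L1[OF linF] by (simp add: F_def Y_def field_simps)
  have C: "levi_form \<rho> p w = (Y w + \<i> * Y (\<i> *s w)) / 4"
    unfolding A B using L2[OF linH1_c[OF assms], of w "w" "\<i> *s w"]
    by (simp add: Y_def sum_divide_distrib[symmetric] field_simps)
  show ?thesis unfolding C by (simp add: Y_def)
qed

lemma LF: assumes "levi_flat U \<rho>" "p \<in> U" "\<rho> p = 0" "D p w = 0" "D p (\<i> *s w) = 0"
  shows "H p w w + H p (\<i> *s w) (\<i> *s w) = 0"
proof -
  have "complex_tangent \<rho> p w" using F3[OF assms(2)] assms(4,5) by simp
  then have "levi_form \<rho> p w = 0" using assms(1-3) unfolding levi_flat_def by blast
  then show ?thesis using F5[OF assms(2), of w] by simp
qed

end

definition nu :: "(complex^2 \<Rightarrow> complex^2 \<Rightarrow> real) \<Rightarrow> complex^2 \<Rightarrow> 2 \<Rightarrow> complex" where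
  "nu D x j = of_real (D x (axis j 1)) + \<i> * of_real (D x (axis j \<i>))"
definition nuv :: "(complex^2 \<Rightarrow> complex^2 \<Rightarrow> real) \<Rightarrow> complex^2 \<Rightarrow> complex^2" where
  "nuv D x = (\<chi> j. nu D x j)"
definition tau :: "(complex^2 \<Rightarrow> complex^2 \<Rightarrow> real) \<Rightarrow> complex^2 \<Rightarrow> complex^2" where
  "tau D x = (\<chi> j. if j = 1 then - cnj (nu D x 2) else cnj (nu D x 1))"
definition Lam :: "(complex^2 \<Rightarrow> complex^2 \<Rightarrow> complex^2 \<Rightarrow> real) \<Rightarrow> complex^2 \<Rightarrow> complex^2 \<Rightarrow> real" where
  "Lam H x v = H x v v + H x (\<i> *s v) (\<i> *s v)"
definition nn :: "complex^2 \<Rightarrow> real" where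
  "nn v = cmod (v$1) + cmod (v$2)"

lemma one_neq_two_2: "(1::2) \<noteq> 2" by simp

lemma nn_nonneg: "nn v \<ge> 0" by (simp add: nn_def)
lemma norm_le_nn: "norm v \<le> nn v"
  unfolding norm_vec_def by (rule order.trans[OF L2_set_le_sum]) (auto simp: sum_2 nn_def)
lemma comp_le_nn: "cmod (v$j) \<le> nn v"
  using exhaust_2[of j] by (auto simp: nn_def)
lemma nn_smult: "nn (c *s v) = cmod c * nn v"
  by (simp add: nn_def norm_mult algebra_simps)
lemma nn_add: "nn (a + b) \<le> nn a + nn b"
  using norm_triangle_ineq[of "a$1" "b$1"] norm_triangle_ineq[of "a$2" "b$2"] by (simp add: nn_def)
lemma nn_ii: "nn (\<i> *s v) = nn v"
  by (simp add: nn_smult)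

lemma bounded_fin:
  fixes F :: "'i \<Rightarrow> 'a::metric_space \<Rightarrow> real"
  assumes "compact K" "finite I" "\<And>i. i \<in> I \<Longrightarrow> continuous_on K (F i)"
  shows "\<exists>M. \<forall>i\<in>I. \<forall>x\<in>K. \<bar>F i x\<bar> \<le> M"
proof -
  define g where "g x = (\<Sum>i\<in>I. \<bar>F i x\<bar>)" for x
  have "continuous_on K g" unfolding g_def using assms(3) by (intro continuous_intros) auto
  then have "compact (g ` K)" using assms(1) by (rule compact_continuous_image)
  then obtain B where B: "\<forall>y\<in>g ` K. \<bar>y\<bar> \<le> B" using compact_imp_bounded bounded_real by blast
  have "\<bar>F i x\<bar> \<le> B" if "i \<in> I" "x \<in> K" for i x
  proof -
    have "\<bar>F i x\<bar> \<le> g x" unfolding g_def using assms(2) that(1) by (intro member_le_sum) auto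
    also have "\<dots> \<le> B" using B that(2) by fastforce
    finally show ?thesis .
  qed
  then show ?thesis by blast
qed

definition E4 :: "(complex^2) set" where "E4 = {axis 1 1, axis 1 \<i>, axis 2 1, axis 2 \<i>}"

lemma finite_E4: "finite E4" by (simp add: E4_def)

lemma abs_lin_bound:
  fixes L :: "complex^2 \<Rightarrow> real"
  assumes "linear L" "\<forall>e\<in>E4. \<bar>L e\<bar> \<le> K"
  shows "\<bar>L w\<bar> \<le> 4 * K * nn w"
proof -
  have c: "\<bar>Re (w$j)\<bar> \<le> nn w" "\<bar>Im (w$j)\<bar> \<le> nn w" for j
    using abs_Re_le_cmod[of "w$j"] abs_Im_le_cmod[of "w$j"] comp_le_nn[of w j] by linarith+
  have k: "\<bar>L (axis 1 1)\<bar> \<le> K" "\<bar>L (axis 1 \<i>)\<bar> \<le> K" "\<bar>L (axis 2 1)\<bar> \<le> K" "\<bar>L (axis 2 \<i>)\<bar> \<le> K"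
    using assms(2) by (auto simp: E4_def)
  have t: "\<bar>a * b\<bar> \<le> nn w * K" if "\<bar>a\<bar> \<le> nn w" "\<bar>b\<bar> \<le> K" for a b
    using that by (simp add: abs_mult mult_mono' nn_nonneg)
  have "\<bar>L w\<bar> \<le> \<bar>Re (w$1) * L (axis 1 1)\<bar> + \<bar>Im (w$1) * L (axis 1 \<i>)\<bar> + \<bar>Re (w$2) * L (axis 2 1)\<bar> + \<bar>Im (w$2) * L (axis 2 \<i>)\<bar>"
    using lin_expand[OF assms(1), of w] by simp
  also have "\<dots> \<le> 4 * K * nn w" 
    using t[OF c(1)[of 1] k(1)] t[OF c(2)[of 1] k(2)] t[OF c(1)[of 2] k(3)] t[OF c(2)[of 2] k(4)]
      mult.commute[of K "nn w"] by linarith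
  finally show ?thesis .
qed

context sm begin

lemma lin1_H: "x \<in> U \<Longrightarrow> linear (\<lambda>a. H x a b)"
  by (rule linearI) (simp_all add: H_add1 H_scale1)
lemma lin2_H: "x \<in> U \<Longrightarrow> linear (H x a)"
  using lin_H bounded_linear.linear by blast
lemma lin_D': "x \<in> U \<Longrightarrow> linear (D x)"
  using lin_D bounded_linear.linear by blast

lemma D_bound: assumes "x \<in> U" "\<forall>e\<in>E4. \<bar>D x e\<bar> \<le> K1"
  shows "\<bar>D x a\<bar> \<le> 4 * K1 * nn a"
  by (rule abs_lin_bound[OF lin_D'[OF assms(1)] assms(2)])

lemma H_bound: assumes "x \<in> U" "\<forall>e\<in>E4. \<forall>e'\<in>E4. \<bar>H x e e'\<bar> \<le> K2"
  shows "\<bar>H x a b\<bar> \<le> 16 * K2 * nn a * nn b"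
proof -
  have "\<bar>H x e b\<bar> \<le> 4 * K2 * nn b" if "e \<in> E4" for e
    using abs_lin_bound[OF lin2_H[OF assms(1)]] assms(2) that by blast
  then have "\<bar>H x a b\<bar> \<le> 4 * (4 * K2 * nn b) * nn a"
    using abs_lin_bound[OF lin1_H[OF assms(1)], where K="4 * K2 * nn b" and w=a] by blast
  then show ?thesis by (simp add: algebra_simps)
qed

end

lemma tau_comps:
  "Re (tau D x $ 1) = - D x (axis 2 1)" "Im (tau D x $ 1) = D x (axis 2 \<i>)"
  "Re (tau D x $ 2) = D x (axis 1 1)" "Im (tau D x $ 2) = - D x (axis 1 \<i>)"
  by (simp_all add: tau_def nu_def)

lemma C1_cong: "open U \<Longrightarrow> (\<And>x. x \<in> U \<Longrightarrow> f x = g x) \<Longrightarrow> C1 U f \<Longrightarrow> C1 U g"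
  unfolding C1_def
  by (metis has_derivative_transform_within_open)

context sm begin

lemma tau_tangent: assumes "x \<in> U"
  shows "D x (tau D x) = 0" "D x (\<i> *s tau D x) = 0"
proof -
  have "(\<Sum>j\<in>UNIV. (complex_of_real (D x (axis j 1)) - \<i> * complex_of_real (D x (axis j \<i>))) * tau D x $ j)
      = complex_of_real (D x (tau D x)) - \<i> * complex_of_real (D x (\<i> *s tau D x))"
    by (rule L1[OF linD_c[OF assms]])
  moreover have "(\<Sum>j\<in>UNIV. (complex_of_real (D x (axis j 1)) - \<i> * complex_of_real (D x (axis j \<i>))) * tau D x $ j) = 0"
    by (simp add: sum_2 tau_def nu_def algebra_simps)
  ultimately have "complex_of_real (D x (tau D x)) - \<i> * complex_of_real (D x (\<i> *s tau D x)) = 0" by simp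
  then show "D x (tau D x) = 0" "D x (\<i> *s tau D x) = 0" by (simp_all add: complex_eq_iff)
qed

lemma H_expand: assumes "x \<in> U"
  shows "H x a b =
    Re (a$1) * (Re (b$1) * H x (axis 1 1) (axis 1 1) + Im (b$1) * H x (axis 1 1) (axis 1 \<i>) + Re (b$2) * H x (axis 1 1) (axis 2 1) + Im (b$2) * H x (axis 1 1) (axis 2 \<i>)) +
    Im (a$1) * (Re (b$1) * H x (axis 1 \<i>) (axis 1 1) + Im (b$1) * H x (axis 1 \<i>) (axis 1 \<i>) + Re (b$2) * H x (axis 1 \<i>) (axis 2 1) + Im (b$2) * H x (axis 1 \<i>) (axis 2 \<i>)) +
    Re (a$2) * (Re (b$1) * H x (axis 2 1) (axis 1 1) + Im (b$1) * H x (axis 2 1) (axis 1 \<i>) + Re (b$2) * H x (axis 2 1) (axis 2 1) + Im (b$2) * H x (axis 2 1) (axis 2 \<i>)) +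
    Im (a$2) * (Re (b$1) * H x (axis 2 \<i>) (axis 1 1) + Im (b$1) * H x (axis 2 \<i>) (axis 1 \<i>) + Re (b$2) * H x (axis 2 \<i>) (axis 2 1) + Im (b$2) * H x (axis 2 \<i>) (axis 2 \<i>))"
  using lin_expand[OF lin1_H[OF assms], of a b]
    lin_expand[OF lin2_H[OF assms], of "axis 1 1" b] lin_expand[OF lin2_H[OF assms], of "axis 1 \<i>" b]
    lin_expand[OF lin2_H[OF assms], of "axis 2 1" b] lin_expand[OF lin2_H[OF assms], of "axis 2 \<i>" b]
  by simp

lemma C1_Hcomp:
  assumes a: "\<And>j. C1 U (\<lambda>x. Re (a x $ j))" "\<And>j. C1 U (\<lambda>x. Im (a x $ j))"
    and b: "\<And>j. C1 U (\<lambda>x. Re (b x $ j))" "\<And>j. C1 U (\<lambda>x. Im (b x $ j))"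
  shows "C1 U (\<lambda>x. H x (a x) (b x))"
  apply (rule C1_cong[OF openU H_expand[symmetric]], assumption)
  apply (intro C1_add C1_mult C1_H a b)
  done

lemma C1_f: "C1 U (\<lambda>x. Lam H x (tau D x))"
proof -
  have t1: "C1 U (\<lambda>x. Re (tau D x $ j))" "C1 U (\<lambda>x. Im (tau D x $ j))" for j
    using exhaust_2[of j] by (auto simp: tau_comps intro: C1_minus[OF C1_D] C1_D)
  have t2: "C1 U (\<lambda>x. Re ((\<i> *s tau D x) $ j))" "C1 U (\<lambda>x. Im ((\<i> *s tau D x) $ j))" for j
    using exhaust_2[of j] by (auto simp: tau_comps intro: C1_minus[OF C1_D] C1_D)
  show ?thesis unfolding Lam_def
    by (intro C1_add C1_Hcomp t1 t2)
qed

lemma f_zero: assumes "levi_flat U \<rho>" "x \<in> U" "\<rho> x = 0"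
  shows "Lam H x (tau D x) = 0"
  unfolding Lam_def by (rule LF[OF assms tau_tangent[OF assms(2)]])

end

lemma ivt_zero:
  fixes \<phi> \<phi>' :: "real \<Rightarrow> real" and c R :: real
  assumes c: "c > 0" and R: "R > 0"
    and der: "\<And>s. \<bar>s\<bar> \<le> R \<Longrightarrow> (\<phi> has_real_derivative \<phi>' s) (at s)"
    and pos: "\<And>s. \<bar>s\<bar> \<le> R \<Longrightarrow> \<phi>' s \<ge> c"
    and small: "\<bar>\<phi> 0\<bar> < c * R"
  shows "\<exists>t. \<bar>t\<bar> \<le> \<bar>\<phi> 0\<bar> / c \<and> \<phi> t = 0"
proof -
  have cont: "continuous_on {a..b} \<phi>" if "-R \<le> a" "b \<le> R" for a b
    by (rule continuous_at_imp_continuous_on) (use der that in \<open>force intro: DERIV_isCont\<close>)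
  have t1R: "\<bar>\<phi> 0\<bar> / c < R" using small c by (simp add: divide_less_eq mult.commute)
  consider "\<phi> 0 = 0" | "\<phi> 0 < 0" | "\<phi> 0 > 0" by linarith
  then show ?thesis
  proof cases
    case 1 then show ?thesis by (intro exI[of _ 0]) simp
  next
    case 2
    define t1 where "t1 = - \<phi> 0 / c"
    have t1: "0 < t1" "t1 < R" using 2 c t1R by (auto simp: t1_def divide_neg_pos)
    obtain z where z: "0 < z" "z < t1" "\<phi> t1 - \<phi> 0 = (t1 - 0) * \<phi>' z"
      using MVT2[OF t1(1), of \<phi> \<phi>'] der t1 by force
    have "(t1 - 0) * \<phi>' z \<ge> t1 * c" using pos[of z] z t1 by (simp add: mult_left_mono)
    moreover have "t1 * c = - \<phi> 0" using c by (simp add: t1_def)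
    ultimately have "\<phi> t1 \<ge> 0" using z by linarith
    then obtain t where "0 \<le> t" "t \<le> t1" "\<phi> t = 0"
      using IVT'[of \<phi> 0 0 t1] 2 t1 cont[of 0 t1] by force
    then show ?thesis using 2 by (intro exI[of _ t]) (auto simp: t1_def)
  next
    case 3
    define t1 where "t1 = - \<phi> 0 / c"
    have t1: "t1 < 0" "-R < t1" using 3 c t1R by (auto simp: t1_def)
    obtain z where z: "t1 < z" "z < 0" "\<phi> 0 - \<phi> t1 = (0 - t1) * \<phi>' z"
      using MVT2[OF t1(1), of \<phi> \<phi>'] der t1 by force
    have "(0 - t1) * \<phi>' z \<ge> (0 - t1) * c" using pos[of z] z t1 by (intro mult_left_mono) auto
    moreover have "(0 - t1) * c = \<phi> 0" using c by (simp add: t1_def)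
    ultimately have "\<phi> t1 \<le> 0" using z by linarith
    then obtain t where "t1 \<le> t" "t \<le> 0" "\<phi> t = 0"
      using IVT'[of \<phi> t1 0 0] 3 t1 cont[of t1 0] by force
    then show ?thesis using 3 by (intro exI[of _ t]) (auto simp: t1_def)
  qed
qed

lemma mvt_abs:
  fixes g g' :: "real \<Rightarrow> real"
  assumes der: "\<And>s. \<bar>s\<bar> \<le> \<bar>t\<bar> \<Longrightarrow> (g has_real_derivative g' s) (at s)"
    and bd: "\<And>s. \<bar>s\<bar> \<le> \<bar>t\<bar> \<Longrightarrow> \<bar>g' s\<bar> \<le> M"
  shows "\<bar>g t - g 0\<bar> \<le> M * \<bar>t\<bar>"
proof -
  consider "t = 0" | "t > 0" | "t < 0" by linarith
  then show ?thesis
  proof cases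
    case 1 then show ?thesis by simp
  next
    case 2
    obtain z where z: "0 < z" "z < t" "g t - g 0 = (t - 0) * g' z"
      using MVT2[OF 2, of g g'] der 2 by force
    have "\<bar>g' z\<bar> \<le> M" using bd z by simp
    then show ?thesis using z 2 by (simp add: abs_mult mult.commute mult_right_mono)
  next
    case 3
    obtain z where z: "t < z" "z < 0" "g 0 - g t = (0 - t) * g' z"
      using MVT2[OF 3, of g g'] der 3 by force
    have "\<bar>g' z\<bar> \<le> M" using bd z by simp
    moreover have "\<bar>g t - g 0\<bar> = \<bar>t\<bar> * \<bar>g' z\<bar>" using z 3 by (simp add: abs_mult abs_minus_commute)
    ultimately show ?thesis using mult_left_mono[of "\<bar>g' z\<bar>" M "\<bar>t\<bar>"] by (simp add: mult.commute)
  qed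
qed


lemma arith_final:
  fixes S R W P F G N c K1 K2 M nt nv L :: real
  assumes nn: "S \<ge> 0" "R \<ge> 0" "W \<ge> 0" "P \<ge> 0" "F \<ge> 0" "G \<ge> 0" "K1 \<ge> 0" "K2 \<ge> 0" "M \<ge> 0" "nt \<ge> 0" "nv \<ge> 0"
    and c: "c > 0" and N: "N \<ge> c\<^sup>2"
    and hS: "S * N \<le> 2 * K1 * W" and hR: "R * N \<le> G" and hF: "F \<le> M / c * P"
    and hnt: "nt \<le> 4 * K1" and hnv: "nv \<le> 4 * K1" and hG: "G \<le> 8 * K1 * W"
    and hL: "- L \<le> S\<^sup>2 * F + 2 * (32 * K2) * (S * nt) * (R * nv) + 32 * K2 * (R * nv)\<^sup>2"
  shows "- L \<le> (4 * K1\<^sup>2 * M / c ^ 5) * P * W\<^sup>2 + (2 * 32 * K2 * 16 * K1\<^sup>2 * 2 * K1 / c ^ 4 + 32 * K2 * 16 * K1\<^sup>2 * 8 * K1 / c ^ 4) * G * W"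
proof -
  have c2: "c\<^sup>2 > 0" using c by simp
  have S: "S \<le> 2 * K1 * W / c\<^sup>2"
  proof -
    have "S * c\<^sup>2 \<le> S * N" using N nn(1) by (rule mult_left_mono)
    then show ?thesis using hS c2 by (simp add: pos_le_divide_eq)
  qed
  have R: "R \<le> G / c\<^sup>2"
  proof -
    have "R * c\<^sup>2 \<le> R * N" using N nn(2) by (rule mult_left_mono)
    then show ?thesis using hR c2 by (simp add: pos_le_divide_eq)
  qed
  have T1: "S\<^sup>2 * F \<le> (2 * K1 * W / c\<^sup>2)\<^sup>2 * (M / c * P)"
    by (intro mult_mono power_mono S hF) (use nn in auto)
  have T2: "(S * nt) * (R * nv) \<le> (2 * K1 * W / c\<^sup>2 * (4 * K1)) * (G / c\<^sup>2 * (4 * K1))"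
    by (intro mult_mono S R hnt hnv) (use nn c in auto)
  have T3: "(R * nv)\<^sup>2 \<le> (G / c\<^sup>2 * (4 * K1))\<^sup>2"
    by (intro power_mono mult_mono R hnv) (use nn c in auto)
  have T3': "(G / c\<^sup>2 * (4 * K1))\<^sup>2 = (G * G) * (16 * K1\<^sup>2 / c ^ 4)"
    by (simp add: power2_eq_square eval_nat_numeral field_simps)
  have T3'': "(G * G) * (16 * K1\<^sup>2 / c ^ 4) \<le> (G * (8 * K1 * W)) * (16 * K1\<^sup>2 / c ^ 4)"
    by (intro mult_right_mono mult_left_mono hG) (use nn c in auto)
  have "- L \<le> (2 * K1 * W / c\<^sup>2)\<^sup>2 * (M / c * P) + 2 * (32 * K2) * ((2 * K1 * W / c\<^sup>2 * (4 * K1)) * (G / c\<^sup>2 * (4 * K1)))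
       + 32 * K2 * ((G * (8 * K1 * W)) * (16 * K1\<^sup>2 / c ^ 4))"
  proof -
    have a: "2 * (32 * K2) * ((S * nt) * (R * nv)) \<le> 2 * (32 * K2) * ((2 * K1 * W / c\<^sup>2 * (4 * K1)) * (G / c\<^sup>2 * (4 * K1)))"
      using T2 nn by (intro mult_left_mono) auto
    have b: "32 * K2 * (R * nv)\<^sup>2 \<le> 32 * K2 * ((G * (8 * K1 * W)) * (16 * K1\<^sup>2 / c ^ 4))"
    proof -
      have "(R * nv)\<^sup>2 \<le> (G * (8 * K1 * W)) * (16 * K1\<^sup>2 / c ^ 4)" using T3 T3' T3'' by linarith
      then show ?thesis using nn by (intro mult_left_mono) auto
    qed
    show ?thesis using hL T1 a b by (simp add: mult.assoc)
  qed
  also have "\<dots> = (4 * K1\<^sup>2 * M / c ^ 5) * P * W\<^sup>2 + (2 * 32 * K2 * 16 * K1\<^sup>2 * 2 * K1 / c ^ 4 + 32 * K2 * 16 * K1\<^sup>2 * 8 * K1 / c ^ 4) * G * W"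
    using c by (simp add: power2_eq_square eval_nat_numeral field_simps)
  finally show ?thesis .
qed


lemma line_deriv:
  fixes F :: "complex^2 \<Rightarrow> real"
  assumes "(F has_derivative F') (at (q + s *\<^sub>R d))"
  shows "((\<lambda>s. F (q + s *\<^sub>R d)) has_real_derivative F' d) (at s)"
proof -
  have lin: "linear F'" using assms has_derivative_bounded_linear bounded_linear.linear by blast
  have l: "((\<lambda>s. q + s *\<^sub>R d) has_derivative (\<lambda>h. h *\<^sub>R d)) (at s)"
    by (auto intro!: derivative_eq_intros)
  have "((F \<circ> (\<lambda>s. q + s *\<^sub>R d)) has_derivative (F' \<circ> (\<lambda>h. h *\<^sub>R d))) (at s)"
    by (rule diff_chain_at[OF l]) (use assms in simp)
  moreover have "(F' \<circ> (\<lambda>h. h *\<^sub>R d)) = (*) (F' d)"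
    by (auto simp: linear_scale[OF lin])
  ultimately show ?thesis by (simp add: has_field_derivative_def comp_def)
qed

definition Qf :: "(complex^2 \<Rightarrow> complex^2 \<Rightarrow> complex^2 \<Rightarrow> real) \<Rightarrow> complex^2 \<Rightarrow> complex^2 \<Rightarrow> complex^2 \<Rightarrow> real" where
  "Qf H x a b = H x a b + H x (\<i> *s a) (\<i> *s b)"

lemma decomp:
  fixes n1 n2 w1 w2 :: complex
  assumes "N = (cmod n1)\<^sup>2 + (cmod n2)\<^sup>2" "N \<noteq> 0"
  defines "s \<equiv> (- w1 * n2 + w2 * n1) / of_real N"
  defines "r \<equiv> (w1 * cnj n1 + w2 * cnj n2) / of_real N"
  shows "s * (- cnj n2) + r * n1 = w1" "s * cnj n1 + r * n2 = w2"
proof -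
  have NN: "complex_of_real N = n1 * cnj n1 + n2 * cnj n2"
    using assms(1) by (simp add: complex_mult_cnj cmod_power2)
  have N0: "complex_of_real N \<noteq> 0" using assms(2) by simp
  show "s * (- cnj n2) + r * n1 = w1"
    using N0 unfolding s_def r_def by (simp add: field_simps) (simp add: NN algebra_simps)
  show "s * cnj n1 + r * n2 = w2"
    using N0 unfolding s_def r_def by (simp add: field_simps) (simp add: NN algebra_simps)
qed

context sm begin

lemma Lam_add: assumes "x \<in> U"
  shows "Lam H x (a + b) = Lam H x a + Lam H x b + Qf H x a b + Qf H x b a"
  by (simp add: Lam_def Qf_def vector_add_ldistrib H_add1[OF assms] H_add2[OF assms])

lemma H_comb: assumes "x \<in> U"
  shows "H x (a *\<^sub>R u + b *\<^sub>R u') (c *\<^sub>R u + d *\<^sub>R u') = a*c*H x u u + a*d*H x u u' + b*c*H x u' u + b*d*H x u' u'"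
  by (simp add: H_add1[OF assms] H_add2[OF assms] H_scale1[OF assms] H_scale2[OF assms] algebra_simps)

lemma Lam_smult: assumes "x \<in> U"
  shows "Lam H x (s *s v) = (cmod s)\<^sup>2 * Lam H x v"
proof -
  have e1: "s *s v = Re s *\<^sub>R v + Im s *\<^sub>R (\<i> *s v)"
    by (simp add: vec_eq_iff forall_2 complex_eq_iff)
  have e2: "\<i> *s (s *s v) = Re s *\<^sub>R (\<i> *s v) + (- Im s) *\<^sub>R v"
    by (simp add: vec_eq_iff forall_2 complex_eq_iff)
  have h1: "H x (s *s v) (s *s v) = Re s * Re s * H x v v + Re s * Im s * H x v (\<i> *s v) + Im s * Re s * H x (\<i> *s v) v + Im s * Im s * H x (\<i> *s v) (\<i> *s v)"
    unfolding e1 by (rule H_comb[OF assms])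
  have h2: "H x (\<i> *s (s *s v)) (\<i> *s (s *s v)) = Re s * Re s * H x (\<i> *s v) (\<i> *s v) + Re s * (- Im s) * H x (\<i> *s v) v + (- Im s) * Re s * H x v (\<i> *s v) + (- Im s) * (- Im s) * H x v v"
    unfolding e2 by (rule H_comb[OF assms])
  show ?thesis
    unfolding Lam_def h1 h2 by (simp only: cmod_power2) (simp add: algebra_simps power2_eq_square)
qed

lemma Qf_bound: assumes "x \<in> U" "\<forall>e\<in>E4. \<forall>e'\<in>E4. \<bar>H x e e'\<bar> \<le> K2"
  shows "\<bar>Qf H x a b\<bar> \<le> 32 * K2 * nn a * nn b"
proof -
  have "\<bar>H x a b\<bar> \<le> 16 * K2 * nn a * nn b" by (rule H_bound[OF assms])
  moreover have "\<bar>H x (\<i> *s a) (\<i> *s b)\<bar> \<le> 16 * K2 * nn a * nn b"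
    using H_bound[OF assms, of "\<i> *s a" "\<i> *s b"] by (simp add: nn_ii)
  ultimately show ?thesis unfolding Qf_def by linarith
qed

lemma Lam_Qf: "Lam H x v = Qf H x v v" by (simp add: Lam_def Qf_def)

end

lemma norm_E4: "e \<in> E4 \<Longrightarrow> norm e = 1"
  by (auto simp: E4_def norm_vec_def L2_set_def sum_2 axis_def)

lemma cmod_ri: "cmod (complex_of_real a + \<i> * complex_of_real b) \<le> \<bar>a\<bar> + \<bar>b\<bar>"
  using norm_triangle_ineq[of "complex_of_real a" "\<i> * complex_of_real b"] by (simp add: norm_mult)
lemma cmod_ri': "cmod (complex_of_real a - \<i> * complex_of_real b) \<le> \<bar>a\<bar> + \<bar>b\<bar>"
  using norm_triangle_ineq4[of "complex_of_real a" "\<i> * complex_of_real b"] by (simp add: norm_mult)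

context sm begin

lemma estimate:
  assumes LFU: "levi_flat U \<rho>" and pU: "p \<in> U" and p0: "\<rho> p = 0" and nz: "D p v0 \<noteq> 0"
  shows "\<exists>r>0. \<exists>Kf Kg. ball p r \<subseteq> U \<and> (\<forall>q\<in>ball p r. \<forall>w.
            - Lam H q w \<le> Kf * \<bar>\<rho> q\<bar> * (nn w)\<^sup>2 + Kg * (\<bar>D q w\<bar> + \<bar>D q (\<i> *s w)\<bar>) * nn w)"
proof -
  have "\<exists>e\<in>E4. D p e \<noteq> 0"
  proof (rule ccontr)
    assume "\<not> ?thesis"
    then have "D p e = 0" if "e\<in>E4" for e using that by auto
    then have "D p v0 = 0" using lin_expand[OF lin_D'[OF pU], of v0] by (simp add: E4_def)
    then show False using nz by simp
  qed
  then obtain e where e: "e \<in> E4" "D p e \<noteq> 0" by blast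
  define \<sigma> where "\<sigma> = sgn (D p e)"
  define d where "d = \<sigma> *\<^sub>R e"
  have Dd: "D x d = \<sigma> * D x e" if "x \<in> U" for x using D_scale[OF that] by (simp add: d_def)
  have \<sigma>2: "\<sigma> * \<sigma> = 1" using e(2) by (simp add: \<sigma>_def sgn_if)
  have normd: "norm d = 1" using norm_E4[OF e(1)] e(2) by (simp add: d_def \<sigma>_def abs_sgn_eq)
  define c0 where "c0 = D p d"
  have c0: "c0 > 0" using e(2) by (simp add: c0_def Dd[OF pU] \<sigma>_def sgn_if)
  define c where "c = c0 / 2"
  have c: "c > 0" using c0 by (simp add: c_def)
  have "isCont (\<lambda>x. D x d) p" using cont_D openU pU continuous_on_eq_continuous_at by blast
  then obtain \<delta>1 where \<delta>1: "\<delta>1 > 0" "\<And>x. dist x p < \<delta>1 \<Longrightarrow> dist (D x d) (D p d) < c"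
    unfolding continuous_at_eps_delta using c by blast
  obtain \<delta>2 where \<delta>2: "\<delta>2 > 0" "ball p \<delta>2 \<subseteq> U" using openU pU open_contains_ball by blast
  define r1 where "r1 = min \<delta>1 \<delta>2 / 2"
  have r1: "r1 > 0" using \<delta>1 \<delta>2 by (simp add: r1_def)
  have cb: "cball p r1 \<subseteq> U" using \<delta>2 r1 by (auto simp: r1_def)
  have Dpos: "D x d \<ge> c" if "x \<in> cball p r1" for x
  proof -
    have "dist x p < \<delta>1" using that r1 \<delta>1 by (auto simp: r1_def dist_commute)
    then have "\<bar>D x d - c0\<bar> < c" using \<delta>1(2) by (simp add: dist_real_def c0_def)
    then show ?thesis using abs_less_iff[of "D x d - c0" c] c_def by linarith
  qed
  obtain K1 where K1: "\<forall>e\<in>E4. \<forall>x\<in>cball p r1. \<bar>D x e\<bar> \<le> K1"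
    using bounded_fin[OF compact_cball[of p r1] finite_E4, where F="\<lambda>e x. D x e"] continuous_on_subset[OF cont_D cb] by blast
  obtain K2 where K2: "\<forall>ee\<in>E4\<times>E4. \<forall>x\<in>cball p r1. \<bar>H x (fst ee) (snd ee)\<bar> \<le> K2"
    using bounded_fin[OF compact_cball[of p r1], where I="E4 \<times> E4" and F="\<lambda>ee x. H x (fst ee) (snd ee)"] finite_E4
      continuous_on_subset[OF cont_H cb] by blast
  obtain f' where f': "\<And>x. x \<in> U \<Longrightarrow> ((\<lambda>x. Lam H x (tau D x)) has_derivative f' x) (at x)"
    "\<And>v. continuous_on U (\<lambda>x. f' x v)"
    using C1_f unfolding C1_def by blast
  obtain M where M: "\<forall>x\<in>cball p r1. \<bar>f' x d\<bar> \<le> M"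
    using bounded_fin[OF compact_cball[of p r1], where I="{d}" and F="\<lambda>v x. f' x v"] continuous_on_subset[OF f'(2) cb] by auto
  have pc: "p \<in> cball p r1" using r1 by simp
  have K1n: "K1 \<ge> 0" using K1 pc e(1) by (meson abs_ge_zero order.trans)
  have K2n: "K2 \<ge> 0"
  proof -
    have "(e, e) \<in> E4 \<times> E4" using e(1) by simp
    then show ?thesis using K2 pc by (meson abs_ge_zero order.trans)
  qed
  have Mn: "M \<ge> 0" using M pc by (meson abs_ge_zero order.trans)
  have K1': "\<forall>e\<in>E4. \<bar>D x e\<bar> \<le> K1" if "x \<in> cball p r1" for x using K1 that by blast
  have K2': "\<forall>e\<in>E4. \<forall>e'\<in>E4. \<bar>H x e e'\<bar> \<le> K2" if "x \<in> cball p r1" for x using K2 that by force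
  have "isCont \<rho> p" using cont_rho openU pU continuous_on_eq_continuous_at by blast
  then obtain \<delta>3 where \<delta>3: "\<delta>3 > 0" "\<And>x. dist x p < \<delta>3 \<Longrightarrow> dist (\<rho> x) (\<rho> p) < c * (r1 / 2)"
    unfolding continuous_at_eps_delta using c r1 by (metis half_gt_zero mult_pos_pos)
  define r2 where "r2 = min \<delta>3 (r1 / 2)"
  have r2: "r2 > 0" using \<delta>3 r1 by (simp add: r2_def)
  have b2: "ball p r2 \<subseteq> cball p r1" using r2 by (auto simp: r2_def)
  define Kf where "Kf = 4 * K1\<^sup>2 * M / c ^ 5"
  define Kg where "Kg = 2 * 32 * K2 * 16 * K1\<^sup>2 * 2 * K1 / c ^ 4 + 32 * K2 * 16 * K1\<^sup>2 * 8 * K1 / c ^ 4"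
  have main: "- Lam H q w \<le> Kf * \<bar>\<rho> q\<bar> * (nn w)\<^sup>2 + Kg * (\<bar>D q w\<bar> + \<bar>D q (\<i> *s w)\<bar>) * nn w"
    if q: "q \<in> ball p r2" for q w
  proof -
    have qc: "q \<in> cball p r1" using q b2 by blast
    have qU: "q \<in> U" using qc cb by blast
    have lineC: "q + s *\<^sub>R d \<in> cball p r1" if "\<bar>s\<bar> \<le> r1 / 2" for s
    proof -
      have "dist p (q + s *\<^sub>R d) \<le> dist p q + norm (s *\<^sub>R d)"
        using norm_triangle_ineq4[of "p - q" "s *\<^sub>R d"] by (simp add: dist_norm algebra_simps)
      also have "\<dots> < r2 + r1 / 2" using q that normd by simp
      also have "\<dots> \<le> r1" by (simp add: r2_def)
      finally show ?thesis by simp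
    qed
    have qd: "dist q p < \<delta>3" using q by (simp add: r2_def dist_commute)
    have small: "\<bar>\<rho> q\<bar> < c * (r1 / 2)" using \<delta>3(2)[OF qd] p0 by simp
    obtain t where t: "\<bar>t\<bar> \<le> \<bar>\<rho> (q + 0 *\<^sub>R d)\<bar> / c" "\<rho> (q + t *\<^sub>R d) = 0"
    proof (rule ivt_zero[OF c _ , of "r1/2" "\<lambda>s. \<rho> (q + s *\<^sub>R d)" "\<lambda>s. D (q + s *\<^sub>R d) d", THEN exE])
      show "r1 / 2 > 0" using r1 by simp
      show "((\<lambda>s. \<rho> (q + s *\<^sub>R d)) has_real_derivative D (q + s *\<^sub>R d) d) (at s)" if "\<bar>s\<bar> \<le> r1 / 2" for s
      proof -
        have "q + s *\<^sub>R d \<in> U" using lineC[OF that] cb by blast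
        then show ?thesis by (intro line_deriv dD)
      qed
      show "D (q + s *\<^sub>R d) d \<ge> c" if "\<bar>s\<bar> \<le> r1 / 2" for s using Dpos lineC[OF that] by blast
      show "\<bar>\<rho> (q + 0 *\<^sub>R d)\<bar> < c * (r1 / 2)" using small by simp
    qed blast
    have tr: "\<bar>t\<bar> \<le> r1 / 2"
    proof -
      have "\<bar>\<rho> q\<bar> / c \<le> r1 / 2" using small c by (simp add: divide_le_eq mult.commute)
      moreover have "\<bar>t\<bar> \<le> \<bar>\<rho> q\<bar> / c" using t(1) by simp
      ultimately show ?thesis by linarith
    qed
    define F where "F = \<bar>Lam H q (tau D q)\<bar>"
    have hF: "F \<le> M / c * \<bar>\<rho> q\<bar>"
    proof -
      have "\<bar>Lam H (q + t *\<^sub>R d) (tau D (q + t *\<^sub>R d)) - Lam H (q + 0 *\<^sub>R d) (tau D (q + 0 *\<^sub>R d))\<bar> \<le> M * \<bar>t\<bar>"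
      proof (rule mvt_abs[where g'="\<lambda>s. f' (q + s *\<^sub>R d) d"])
        fix s assume s: "\<bar>s\<bar> \<le> \<bar>t\<bar>"
        then have sC: "q + s *\<^sub>R d \<in> cball p r1" using lineC tr by simp
        show "((\<lambda>s. Lam H (q + s *\<^sub>R d) (tau D (q + s *\<^sub>R d))) has_real_derivative f' (q + s *\<^sub>R d) d) (at s)"
        proof -
          have "q + s *\<^sub>R d \<in> U" using sC cb by blast
          then show ?thesis by (intro line_deriv[where F="\<lambda>x. Lam H x (tau D x)"] f'(1))
        qed
        show "\<bar>f' (q + s *\<^sub>R d) d\<bar> \<le> M" using M sC by blast
      qed
      moreover have "Lam H (q + t *\<^sub>R d) (tau D (q + t *\<^sub>R d)) = 0"
        by (rule f_zero[OF LFU _ t(2)]) (use lineC[OF tr] cb in blast)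
      ultimately have "F \<le> M * \<bar>t\<bar>" by (simp add: F_def)
      also have "\<dots> \<le> M * (\<bar>\<rho> q\<bar> / c)" using t(1) Mn by (intro mult_left_mono) simp_all
      finally show ?thesis by simp
    qed
    define n1 where "n1 = nu D q 1"
    define n2 where "n2 = nu D q 2"
    define N where "N = (cmod n1)\<^sup>2 + (cmod n2)\<^sup>2"
    have NE: "N = (D q (axis 1 1))\<^sup>2 + (D q (axis 1 \<i>))\<^sup>2 + (D q (axis 2 1))\<^sup>2 + (D q (axis 2 \<i>))\<^sup>2"
      by (simp add: N_def n1_def n2_def nu_def cmod_power2)
    have Nc: "N \<ge> c\<^sup>2"
    proof -
      have "(D q e)\<^sup>2 \<le> N" using e(1) unfolding NE E4_def by auto
      moreover have "(D q d)\<^sup>2 = (D q e)\<^sup>2" using \<sigma>2 by (simp add: Dd[OF qU] power2_eq_square algebra_simps)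
      moreover have "c\<^sup>2 \<le> (D q d)\<^sup>2" using Dpos[OF qc] c by (intro power_mono) auto
      ultimately show ?thesis by linarith
    qed
    have N0: "N \<noteq> 0" using Nc c by (metis not_le zero_less_power2 less_irrefl order.strict_trans2 c)
    have Npos: "N > 0" using Nc c by (smt (verit) zero_less_power2)
    define s where "s = (- (w$1) * n2 + (w$2) * n1) / of_real N"
    define r where "r = ((w$1) * cnj n1 + (w$2) * cnj n2) / of_real N"
    have wdec: "w = s *s tau D q + r *s nuv D q"
      using decomp[OF N_def N0, of "w$1" "w$2"]
      by (simp add: vec_eq_iff forall_2 tau_def nuv_def n1_def[symmetric] n2_def[symmetric] s_def r_def)
    define Q1 where "Q1 = Qf H q (s *s tau D q) (r *s nuv D q)"
    define Q2 where "Q2 = Qf H q (r *s nuv D q) (s *s tau D q)"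
    define Q3 where "Q3 = Qf H q (r *s nuv D q) (r *s nuv D q)"
    have Lw: "Lam H q w = (cmod s)\<^sup>2 * Lam H q (tau D q) + Q1 + Q2 + Q3"
      apply (subst wdec)
      unfolding Lam_add[OF qU] Lam_smult[OF qU] Q1_def Q2_def Q3_def Lam_Qf[symmetric]
      by (simp add: Lam_smult[OF qU])
    have hn1: "cmod n1 \<le> 2 * K1"
      using cmod_ri[of "D q (axis 1 1)" "D q (axis 1 \<i>)"] K1'[OF qc] by (simp add: n1_def nu_def E4_def) 
    have hn2: "cmod n2 \<le> 2 * K1"
      using cmod_ri[of "D q (axis 2 1)" "D q (axis 2 \<i>)"] K1'[OF qc] by (simp add: n2_def nu_def E4_def) 
    have nt: "nn (tau D q) = cmod n1 + cmod n2" by (simp add: nn_def tau_def n1_def n2_def)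
    have nv: "nn (nuv D q) = cmod n1 + cmod n2" by (simp add: nn_def nuv_def n1_def n2_def)
    have hS: "cmod s * N \<le> 2 * K1 * nn w"
    proof -
      have "cmod s * N = cmod (- (w$1) * n2 + (w$2) * n1)" using Npos by (simp add: s_def norm_divide)
      also have "\<dots> \<le> cmod (w$1) * cmod n2 + cmod (w$2) * cmod n1"
        using norm_triangle_ineq[of "- (w$1) * n2" "(w$2) * n1"] by (simp add: norm_mult)
      also have "\<dots> \<le> cmod (w$1) * (2 * K1) + cmod (w$2) * (2 * K1)"
        using hn1 hn2 by (intro add_mono mult_left_mono) auto
      also have "\<dots> = 2 * K1 * nn w" by (simp add: nn_def algebra_simps)
      finally show ?thesis .
    qed
    define G where "G = \<bar>D q w\<bar> + \<bar>D q (\<i> *s w)\<bar>"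
    have hR: "cmod r * N \<le> G"
    proof -
      have "(w$1) * cnj n1 + (w$2) * cnj n2 = complex_of_real (D q w) - \<i> * complex_of_real (D q (\<i> *s w))"
        using L1[OF linD_c[OF qU], of w] by (simp add: sum_2 n1_def n2_def nu_def algebra_simps)
      then have "cmod r * N = cmod (complex_of_real (D q w) - \<i> * complex_of_real (D q (\<i> *s w)))"
        using Npos by (simp add: r_def norm_divide)
      also have "\<dots> \<le> G" unfolding G_def by (rule cmod_ri')
      finally show ?thesis .
    qed
    have hG: "G \<le> 8 * K1 * nn w"
      using D_bound[OF qU K1'[OF qc], of w] D_bound[OF qU K1'[OF qc], of "\<i> *s w"] by (simp add: G_def nn_ii)
    have hQ: "\<bar>Qf H q a b\<bar> \<le> 32 * K2 * nn a * nn b" for a b by (rule Qf_bound[OF qU K2'[OF qc]])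
    have hL: "- Lam H q w \<le> (cmod s)\<^sup>2 * F + 2 * (32 * K2) * (cmod s * (cmod n1 + cmod n2)) * (cmod r * (cmod n1 + cmod n2))
        + 32 * K2 * (cmod r * (cmod n1 + cmod n2))\<^sup>2"
    proof -
      have "- ((cmod s)\<^sup>2 * Lam H q (tau D q)) \<le> (cmod s)\<^sup>2 * F"
        using mult_left_mono[OF abs_ge_minus_self[of "Lam H q (tau D q)"] zero_le_power2[of "cmod s"]]
        unfolding F_def by simp
      moreover have "- Q1 \<le> 32 * K2 * (cmod s * (cmod n1 + cmod n2)) * (cmod r * (cmod n1 + cmod n2))"
        using hQ[of "s *s tau D q" "r *s nuv D q"] by (simp add: Q1_def nn_smult nt nv)
      moreover have "- Q2 \<le> 32 * K2 * (cmod s * (cmod n1 + cmod n2)) * (cmod r * (cmod n1 + cmod n2))"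
        using hQ[of "r *s nuv D q" "s *s tau D q"] by (simp add: Q2_def nn_smult nt nv algebra_simps)
      moreover have "- Q3 \<le> 32 * K2 * (cmod r * (cmod n1 + cmod n2))\<^sup>2"
        using hQ[of "r *s nuv D q" "r *s nuv D q"] by (simp add: Q3_def nn_smult nt nv power2_eq_square algebra_simps)
      ultimately show ?thesis unfolding Lw by linarith
    qed
    have "- Lam H q w \<le> Kf * \<bar>\<rho> q\<bar> * (nn w)\<^sup>2 + Kg * G * nn w"
      unfolding Kf_def Kg_def
      by (rule arith_final[OF _ _ _ _ _ _ K1n K2n Mn _ _ c Nc hS hR hF _ _ hG hL])
         (use hn1 hn2 nn_nonneg[of w] in \<open>auto simp: F_def G_def\<close>)
    then show ?thesis by (simp add: G_def)
  qed
  show ?thesis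
    by (rule exI[of _ r2], intro conjI exI[of _ Kf] exI[of _ Kg]) (use r2 b2 cb main in auto)
qed

end

lemma vecderiv:
  fixes f :: "real \<Rightarrow> complex^2"
  assumes "\<And>j. ((\<lambda>t. f t $ j) has_vector_derivative f' $ j) (at t)"
  shows "(f has_vector_derivative f') (at t)"
  unfolding has_vector_derivative_def
proof (subst has_derivative_componentwise_within, intro ballI)
  fix i :: "complex^2" assume "i \<in> Basis"
  then obtain j u where ju: "i = axis j u" "u \<in> Basis" by (auto simp: Basis_vec_def)
  have "((\<lambda>t. inner (f t $ j) u) has_derivative (\<lambda>h. inner (h *\<^sub>R f' $ j) u)) (at t)"
    using bounded_linear.has_derivative[OF bounded_linear_inner_left assms[of j, unfolded has_vector_derivative_def]] .
  then show "((\<lambda>x. f x \<bullet> i) has_derivative (\<lambda>x. (x *\<^sub>R f') \<bullet> i)) (at t)"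
    by (simp add: ju inner_axis)
qed

lemma line_vd:
  fixes \<Phi> :: "complex \<Rightarrow> complex"
  assumes "(\<Phi> has_field_derivative \<Phi>') (at (z + of_real t * e))"
  shows "((\<lambda>s. \<Phi> (z + of_real s * e)) has_vector_derivative (e * \<Phi>')) (at t)"
proof -
  have "((\<lambda>s. z + of_real s * e) has_vector_derivative e) (at t)"
    by (auto intro!: derivative_eq_intros simp: has_vector_derivative_def scaleR_conv_of_real)
  from field_vector_diff_chain_within[OF this, of \<Phi> \<Phi>'] assms
  show ?thesis by (simp add: o_def has_field_derivative_at_within)
qed

lemma bl_ii: "bounded_linear (\<lambda>w::complex^2. c *s w)"
proof -
  have "linear (\<lambda>w::complex^2. c *s w)"
    by (rule linearI) (simp_all add: vec_eq_iff scaleR_conv_of_real algebra_simps)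
  then show ?thesis using linear_conv_bounded_linear by blast
qed

lemma bl_comp: "bounded_linear (\<lambda>w::complex^2. Re (w $ j))" "bounded_linear (\<lambda>w::complex^2. Im (w $ j))"
  by (auto intro: bounded_linear_compose[OF bounded_linear_Re bounded_linear_vec_nth]
                  bounded_linear_compose[OF bounded_linear_Im bounded_linear_vec_nth])

context sm begin

lemma bilin_chain:
  fixes \<alpha> \<beta> :: "real \<Rightarrow> complex^2"
  assumes da: "(\<alpha> has_vector_derivative a') (at t)" and db: "(\<beta> has_vector_derivative b') (at t)"
    and S: "open S" "t \<in> S" "\<And>s. s \<in> S \<Longrightarrow> \<alpha> s \<in> U"
  shows "((\<lambda>s. D (\<alpha> s) (\<beta> s)) has_real_derivative (H (\<alpha> t) (\<beta> t) a' + D (\<alpha> t) b')) (at t)"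
proof -
  have tU: "\<alpha> t \<in> U" using S by blast
  have dD': "((\<lambda>s. D (\<alpha> s) e) has_real_derivative H (\<alpha> t) e a') (at t)" for e
  proof -
    have "(((\<lambda>x. D x e) \<circ> \<alpha>) has_vector_derivative H (\<alpha> t) e a') (at t)"
      by (rule vector_derivative_diff_chain_within[OF da], rule has_derivative_at_withinI, rule dH[OF tU])
    then show ?thesis by (simp add: has_real_derivative_iff_has_vector_derivative o_def)
  qed
  have dc: "((\<lambda>s. Re (\<beta> s $ j)) has_real_derivative Re (b' $ j)) (at t)"
           "((\<lambda>s. Im (\<beta> s $ j)) has_real_derivative Im (b' $ j)) (at t)" for j
    using bounded_linear.has_vector_derivative[OF bl_comp(1) db, of j]
          bounded_linear.has_vector_derivative[OF bl_comp(2) db, of j]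
    by (simp_all add: has_real_derivative_iff_has_vector_derivative)
  define E where "E s = Re (\<beta> s $ 1) * D (\<alpha> s) (axis 1 1) + Im (\<beta> s $ 1) * D (\<alpha> s) (axis 1 \<i>)
      + Re (\<beta> s $ 2) * D (\<alpha> s) (axis 2 1) + Im (\<beta> s $ 2) * D (\<alpha> s) (axis 2 \<i>)" for s
  have dE: "(E has_real_derivative
       (Re (b' $ 1) * D (\<alpha> t) (axis 1 1) + H (\<alpha> t) (axis 1 1) a' * Re (\<beta> t $ 1)
      + (Im (b' $ 1) * D (\<alpha> t) (axis 1 \<i>) + H (\<alpha> t) (axis 1 \<i>) a' * Im (\<beta> t $ 1))
      + (Re (b' $ 2) * D (\<alpha> t) (axis 2 1) + H (\<alpha> t) (axis 2 1) a' * Re (\<beta> t $ 2))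
      + (Im (b' $ 2) * D (\<alpha> t) (axis 2 \<i>) + H (\<alpha> t) (axis 2 \<i>) a' * Im (\<beta> t $ 2)))) (at t)"
    unfolding E_def
    by (intro DERIV_add DERIV_mult dc dD')
  have "Re (b' $ 1) * D (\<alpha> t) (axis 1 1) + H (\<alpha> t) (axis 1 1) a' * Re (\<beta> t $ 1)
      + (Im (b' $ 1) * D (\<alpha> t) (axis 1 \<i>) + H (\<alpha> t) (axis 1 \<i>) a' * Im (\<beta> t $ 1))
      + (Re (b' $ 2) * D (\<alpha> t) (axis 2 1) + H (\<alpha> t) (axis 2 1) a' * Re (\<beta> t $ 2))
      + (Im (b' $ 2) * D (\<alpha> t) (axis 2 \<i>) + H (\<alpha> t) (axis 2 \<i>) a' * Im (\<beta> t $ 2))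
      = H (\<alpha> t) (\<beta> t) a' + D (\<alpha> t) b'"
    using lin_expand[OF lin_D'[OF tU], of b'] lin_expand[OF lin1_H[OF tU], of "\<beta> t" a'] by (simp add: algebra_simps)
  with dE have dE': "(E has_real_derivative H (\<alpha> t) (\<beta> t) a' + D (\<alpha> t) b') (at t)" by simp
  show ?thesis
  proof (rule has_field_derivative_transform_within_open[OF dE' S(1,2)])
    fix s assume "s \<in> S"
    then show "E s = D (\<alpha> s) (\<beta> s)" using lin_expand[OF lin_D'[OF S(3)], of s "\<beta> s"] by (simp add: E_def)
  qed
qed

end

lemma norm_smult_vec: "norm (c *s (v::complex^2)) = cmod c * norm v"
proof -
  have "norm (c *s v) = sqrt ((cmod c)\<^sup>2 * ((cmod (v$1))\<^sup>2 + (cmod (v$2))\<^sup>2))"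
    by (simp add: norm_vec_def L2_set_def sum_2 norm_mult power_mult_distrib algebra_simps)
  also have "\<dots> = cmod c * norm v"
    by (simp add: real_sqrt_mult norm_vec_def L2_set_def sum_2)
  finally show ?thesis .
qed

lemma bl_smult_left: "bounded_linear (\<lambda>h::complex. h *s (v::complex^2))"
proof -
  have "linear (\<lambda>h::complex. h *s (v::complex^2))"
    apply (rule linearI)
     apply (simp add: vec_eq_iff algebra_simps)
    apply (simp only: vec_eq_iff vector_scalar_mult_def vec_lambda_beta vector_scaleR_component)
    apply (simp add: scaleR_conv_of_real)
    done
  then show ?thesis using linear_conv_bounded_linear by blast
qed

lemma holo_line:
  assumes "holo_map_on Dh g" "y + z *s v \<in> Dh"
  shows "\<exists>a. ((\<lambda>\<mu>. g (y + \<mu> *s v) $ j) has_field_derivative a) (at z)"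
proof -
  obtain L where L: "(g has_derivative L) (at (y + z *s v))" "\<And>c w. L (c *s w) = c *s L w"
    using assms unfolding holo_map_on_def by blast
  have P: "((\<lambda>\<mu>. y + \<mu> *s v) has_derivative (\<lambda>h. h *s v)) (at z)"
    using has_derivative_add[OF has_derivative_const bounded_linear_imp_has_derivative[OF bl_smult_left, of v]]
    by simp
  have "((g \<circ> (\<lambda>\<mu>. y + \<mu> *s v)) has_derivative (L \<circ> (\<lambda>h. h *s v))) (at z)"
    by (rule diff_chain_at[OF P]) (use L in simp)
  then have "((\<lambda>\<mu>. g (y + \<mu> *s v)) has_derivative (\<lambda>h. h *s L v)) (at z)"
    by (simp add: o_def L(2))
  from bounded_linear.has_derivative[OF bounded_linear_vec_nth[of j] this]
  have "((\<lambda>\<mu>. g (y + \<mu> *s v) $ j) has_derivative (\<lambda>h. h * (L v $ j))) (at z)" by simp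
  moreover have "(\<lambda>h. h * (L v $ j)) = (*) (L v $ j)" by (auto simp: mult.commute)
  ultimately show ?thesis unfolding has_field_derivative_def by auto
qed


context sm begin

lemma local_open:
  assumes LFU: "levi_flat U \<rho>"
    and Dh: "open Dh" and holo: "holo_map_on Dh g"
    and gU: "\<And>z. z \<in> Dh \<Longrightarrow> g z \<in> U" and le0: "\<And>z. z \<in> Dh \<Longrightarrow> \<rho> (g z) \<le> 0"
    and nz: "\<And>p. p \<in> U \<Longrightarrow> \<rho> p = 0 \<Longrightarrow> \<exists>v. D p v \<noteq> 0"
    and z0: "z0 \<in> Dh" "\<rho> (g z0) = 0"
  shows "\<exists>\<epsilon>>0. \<forall>z\<in>ball z0 \<epsilon>. z \<in> Dh \<and> \<rho> (g z) = 0"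
proof -
  define p where "p = g z0"
  have pU: "p \<in> U" and p0: "\<rho> p = 0" using gU z0 by (auto simp: p_def)
  obtain v0 where v0: "D p v0 \<noteq> 0" using nz[OF pU p0] by blast
  obtain r Kf Kg where r: "r > 0" "ball p r \<subseteq> U"
    and est: "\<And>q w. q \<in> ball p r \<Longrightarrow> - Lam H q w \<le> Kf * \<bar>\<rho> q\<bar> * (nn w)\<^sup>2 + Kg * (\<bar>D q w\<bar> + \<bar>D q (\<i> *s w)\<bar>) * nn w"
    using estimate[OF LFU pU p0 v0] by blast
  have gcont: "continuous_on Dh g"
    using holo unfolding holo_map_on_def
    by (metis continuous_at_imp_continuous_on has_derivative_continuous)
  have "isCont g z0" using continuous_on_eq_continuous_at Dh gcont z0 by blast
  then obtain \<delta>1 where \<delta>1: "\<delta>1 > 0" "\<And>z. dist z z0 < \<delta>1 \<Longrightarrow> dist (g z) (g z0) < r"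
    unfolding continuous_at_eps_delta using r by blast
  obtain \<delta>2 where \<delta>2: "\<delta>2 > 0" "ball z0 \<delta>2 \<subseteq> Dh" using Dh z0 open_contains_ball by blast
  define \<delta> where "\<delta> = min \<delta>1 \<delta>2"
  have \<delta>: "\<delta> > 0" using \<delta>1 \<delta>2 by (simp add: \<delta>_def)
  have inD: "z \<in> Dh" if "z \<in> ball z0 \<delta>" for z using that \<delta>2 by (auto simp: \<delta>_def)
  have ing: "g z \<in> ball p r" if "z \<in> ball z0 \<delta>" for z
    using that \<delta>1(2)[of z] by (auto simp: \<delta>_def p_def dist_commute)
  define \<phi> where "\<phi> z = \<rho> (g z)" for z
  have \<phi>cont: "continuous_on Dh \<phi>"
    unfolding \<phi>_def by (rule continuous_on_compose2[OF cont_rho gcont]) (use gU in auto)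
  have main: "\<phi> y = 0" if y: "y \<in> ball z0 (\<delta>/4)" for y
  proof (rule ccontr)
    assume ny: "\<phi> y \<noteq> 0"
    have yb: "y \<in> ball z0 \<delta>" using y \<delta> by auto
    define C0 where "C0 = cball y (\<delta>/4)"
    have C0sub: "C0 \<subseteq> ball z0 \<delta>"
    proof
      fix z assume "z \<in> C0"
      then have "dist y z \<le> \<delta>/4" by (simp add: C0_def)
      moreover have "dist z0 y < \<delta>/4" using y by simp
      ultimately have "dist z0 z < \<delta>" using dist_triangle[of z0 z y] \<delta> by linarith
      then show "z \<in> ball z0 \<delta>" by simp
    qed
    define Zc where "Zc = {z \<in> C0. \<phi> z = 0}"
    have clZ: "closed Zc" unfolding Zc_def C0_def
      by (rule continuous_closed_preimage_constant[OF continuous_on_subset[OF \<phi>cont]])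
         (use C0sub inD in \<open>auto simp: C0_def\<close>)
    have z0Z: "z0 \<in> Zc" using y z0 by (auto simp: Zc_def C0_def \<phi>_def dist_commute)
    obtain zs where zs: "zs \<in> Zc" and zmin: "\<And>z. z \<in> Zc \<Longrightarrow> dist y zs \<le> dist y z"
      using distance_attains_inf[OF clZ, of y] z0Z by blast
    define R where "R = dist y zs"
    have R0: "R > 0" using zs ny by (auto simp: R_def Zc_def)
    have Rd: "R < \<delta>/4" using zmin[OF z0Z] y by (simp add: R_def dist_commute)
    have negR: "\<phi> z < 0" if "dist y z < R" for z
    proof -
      have zC: "z \<in> C0" using that Rd by (simp add: C0_def)
      then have zD: "z \<in> Dh" using C0sub inD by blast
      have "\<phi> z \<noteq> 0"
      proof
        assume "\<phi> z = 0"
        then have "z \<in> Zc" using zC by (simp add: Zc_def)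
        then show False using zmin[of z] that by (simp add: R_def)
      qed
      then show ?thesis using le0[OF zD] by (simp add: \<phi>_def)
    qed
    define v where "v = zs - y"
    have nv: "norm v = R" by (simp add: v_def R_def dist_norm norm_minus_commute)
    define P where "P z = y + z *s v" for z
    have Pball: "P z \<in> ball z0 \<delta>" if "cmod z < 3" for z
    proof -
      have "dist z0 (P z) \<le> dist z0 y + norm (z *s v)"
        using norm_triangle_ineq4[of "z0 - y" "z *s v"] by (simp add: P_def dist_norm algebra_simps)
      also have "norm (z *s v) = cmod z * R" by (simp add: norm_smult_vec nv)
      also have "cmod z * R \<le> 3 * R" using that R0 by (intro mult_right_mono) auto
      finally have "dist z0 (P z) \<le> dist z0 y + 3 * R" by simp
      moreover have "dist z0 y < \<delta>/4" using y by simp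
      ultimately show ?thesis using Rd by simp
    qed
    define \<Gamma> where "\<Gamma> j z = g (P z) $ j" for j z
    have hol: "(\<Gamma> j) holomorphic_on ball 0 3" for j
      unfolding holomorphic_on_def
    proof
      fix z :: complex assume "z \<in> ball 0 3"
      then have "P z \<in> Dh" using Pball inD by simp
      then obtain a where "((\<lambda>\<mu>. g (y + \<mu> *s v) $ j) has_field_derivative a) (at z)"
        using holo_line[OF holo, of y z v j] by (auto simp: P_def)
      moreover have "\<Gamma> j = (\<lambda>\<mu>. g (y + \<mu> *s v) $ j)" by (simp add: fun_eq_iff \<Gamma>_def P_def)
      ultimately show "(\<Gamma> j) field_differentiable (at z within ball 0 3)"
        unfolding field_differentiable_def by (metis has_field_derivative_at_within)
    qed
    have hol': "(deriv (\<Gamma> j)) holomorphic_on ball 0 3" for j by (rule holomorphic_deriv[OF hol]) simp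
    have d\<Gamma>: "(\<Gamma> j has_field_derivative deriv (\<Gamma> j) z) (at z)" if "z \<in> ball 0 3" for j z
      using holomorphic_on_imp_differentiable_at[OF hol _ that] DERIV_deriv_iff_field_differentiable by blast
    have d\<Gamma>': "(deriv (\<Gamma> j) has_field_derivative deriv (deriv (\<Gamma> j)) z) (at z)" if "z \<in> ball 0 3" for j z
      using holomorphic_on_imp_differentiable_at[OF hol' _ that] DERIV_deriv_iff_field_differentiable by blast
    define \<gamma> where "\<gamma> z = g (P z)" for z
    define \<gamma>1 where "\<gamma>1 z = (\<chi> j. deriv (\<Gamma> j) z)" for z
    define \<gamma>2 where "\<gamma>2 z = (\<chi> j. deriv (deriv (\<Gamma> j)) z)" for z
    have \<gamma>U: "\<gamma> z \<in> ball p r" "\<gamma> z \<in> U" if "cmod z < 3" for z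
      using ing[OF Pball[OF that]] r by (auto simp: \<gamma>_def)
    have V\<gamma>: "((\<lambda>s. \<gamma> (z + of_real s * e)) has_vector_derivative (e *s \<gamma>1 z)) (at 0)" if "z \<in> ball 0 3" for z e
    proof (rule vecderiv)
      fix j
      have "((\<lambda>s. \<Gamma> j (z + of_real s * e)) has_vector_derivative (e * deriv (\<Gamma> j) z)) (at 0)"
        by (rule line_vd) (use d\<Gamma>[OF that] in simp)
      then show "((\<lambda>s. \<gamma> (z + of_real s * e) $ j) has_vector_derivative (e *s \<gamma>1 z) $ j) (at 0)"
        by (simp add: \<gamma>_def \<gamma>1_def \<Gamma>_def)
    qed
    have V\<gamma>1: "((\<lambda>s. \<gamma>1 (z + of_real s * e)) has_vector_derivative (e *s \<gamma>2 z)) (at 0)" if "z \<in> ball 0 3" for z e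
    proof (rule vecderiv)
      fix j
      have "((\<lambda>s. deriv (\<Gamma> j) (z + of_real s * e)) has_vector_derivative (e * deriv (deriv (\<Gamma> j)) z)) (at 0)"
        by (rule line_vd) (use d\<Gamma>'[OF that] in simp)
      then show "((\<lambda>s. \<gamma>1 (z + of_real s * e) $ j) has_vector_derivative (e *s \<gamma>2 z) $ j) (at 0)"
        by (simp add: \<gamma>1_def \<gamma>2_def)
    qed
    have chain1: "((\<lambda>s. \<rho> (\<gamma> (z + of_real s * e))) has_real_derivative D (\<gamma> z) (e *s \<gamma>1 z)) (at 0)"
      if "z \<in> ball 0 3" for z e
    proof -
      have zU: "\<gamma> z \<in> U" using \<gamma>U that by simp
      have "((\<rho> \<circ> (\<lambda>s. \<gamma> (z + of_real s * e))) has_vector_derivative D (\<gamma> z) (e *s \<gamma>1 z)) (at 0)"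
        by (rule vector_derivative_diff_chain_within[OF V\<gamma>[OF that]], rule has_derivative_at_withinI) (use dD[OF zU] in simp)
      then show ?thesis by (simp add: has_real_derivative_iff_has_vector_derivative o_def)
    qed
    have chain2: "((\<lambda>s. D (\<gamma> (z + of_real s * e)) (c *s \<gamma>1 (z + of_real s * e))) has_real_derivative
        H (\<gamma> z) (c *s \<gamma>1 z) (e *s \<gamma>1 z) + D (\<gamma> z) (c *s (e *s \<gamma>2 z))) (at 0)"
      if "z \<in> ball 0 3" "cmod e = 1" for z e c
    proof -
      have "((\<lambda>s. D (\<gamma> (z + of_real s * e)) (c *s \<gamma>1 (z + of_real s * e))) has_real_derivative
        H (\<gamma> (z + of_real 0 * e)) (c *s \<gamma>1 (z + of_real 0 * e)) (e *s \<gamma>1 z) + D (\<gamma> (z + of_real 0 * e)) (c *s (e *s \<gamma>2 z))) (at 0)"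
      proof (rule bilin_chain[where S="{s. cmod (z + of_real s * e) < 3}"])
        show "((\<lambda>s. \<gamma> (z + of_real s * e)) has_vector_derivative e *s \<gamma>1 z) (at 0)" by (rule V\<gamma>[OF that(1)])
        show "((\<lambda>s. c *s \<gamma>1 (z + of_real s * e)) has_vector_derivative c *s (e *s \<gamma>2 z)) (at 0)"
          by (rule bounded_linear.has_vector_derivative[OF bl_ii V\<gamma>1[OF that(1)]])
        show "open {s. cmod (z + of_real s * e) < 3}"
          by (intro open_Collect_less continuous_intros)
        show "0 \<in> {s. cmod (z + of_real s * e) < 3}" using that by simp
        show "\<gamma> (z + of_real s * e) \<in> U" if "s \<in> {s. cmod (z + of_real s * e) < 3}" for s
          using \<gamma>U that by simp
      qed
      then show ?thesis by simp
    qed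
    have \<gamma>1cont: "continuous_on (ball 0 3) \<gamma>1"
      unfolding \<gamma>1_def by (intro continuous_on_vec_lambda holomorphic_on_imp_continuous_on hol')
    obtain B where B: "\<And>z. z \<in> cball 0 2 \<Longrightarrow> nn (\<gamma>1 z) \<le> B"
    proof -
      have "continuous_on (cball 0 2) (\<lambda>z. nn (\<gamma>1 z))"
        unfolding nn_def by (intro continuous_intros continuous_on_subset[OF \<gamma>1cont]) auto
      from compact_continuous_image[OF this compact_cball]
      obtain B where "\<forall>x\<in>(\<lambda>z. nn (\<gamma>1 z)) ` cball 0 2. \<bar>x\<bar> \<le> B"
        using compact_imp_bounded bounded_real by blast
      then have "\<And>z. z \<in> cball 0 2 \<Longrightarrow> nn (\<gamma>1 z) \<le> B" by (metis abs_le_D1 image_eqI)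
      then show ?thesis by (rule that)
    qed
    have B0: "B \<ge> 0" using B[of 0] nn_nonneg[of "\<gamma>1 0"] by simp
    define C where "C = \<bar>Kf\<bar> * B\<^sup>2 + \<bar>Kg\<bar> * B"
    have C0: "C \<ge> 0" using B0 by (simp add: C_def)
    define u where "u z = - \<rho> (\<gamma> z)" for z
    define ux where "ux z = - D (\<gamma> z) (\<gamma>1 z)" for z
    define uy where "uy z = - D (\<gamma> z) (\<i> *s \<gamma>1 z)" for z
    define uxx where "uxx z = - (H (\<gamma> z) (\<gamma>1 z) (\<gamma>1 z) + D (\<gamma> z) (\<gamma>2 z))" for z
    define uyy where "uyy z = - (H (\<gamma> z) (\<i> *s \<gamma>1 z) (\<i> *s \<gamma>1 z) + D (\<gamma> z) (\<i> *s (\<i> *s \<gamma>2 z)))" for z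
    have b23: "z \<in> ball 0 3" if "z \<in> ball 0 2" for z :: complex using that by simp
    show False
    proof (rule hopf[OF C0, of u ux uxx uy uyy])
      show "continuous_on (ball 0 2) u"
      proof -
        have Pc: "continuous_on (ball 0 2) P" unfolding P_def
          by (intro continuous_on_add continuous_on_const linear_continuous_on bl_smult_left)
        have PD: "P ` ball 0 2 \<subseteq> Dh" using Pball inD by force
        have "continuous_on (ball 0 2) (\<phi> \<circ> P)"
          by (rule continuous_on_compose[OF Pc continuous_on_subset[OF \<phi>cont PD]])
        moreover have "u = (\<lambda>z. - (\<phi> \<circ> P) z)" by (simp add: fun_eq_iff u_def \<gamma>_def \<phi>_def)
        ultimately show ?thesis by (simp add: continuous_on_minus)
      qed
      show "\<forall>z\<in>ball 0 2. 0 \<le> u z" using Pball inD le0 by (force simp: u_def \<gamma>_def)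
      show "\<forall>z\<in>ball 0 1. 0 < u z"
      proof
        fix z :: complex assume z: "z \<in> ball 0 1"
        have "dist y (P z) = cmod z * R" by (simp add: P_def dist_norm norm_smult_vec nv norm_minus_commute)
        also have "\<dots> < R" using z R0 by simp
        finally show "0 < u z" using negR by (simp add: u_def \<gamma>_def \<phi>_def)
      qed
      show "u 1 = 0" using zs by (simp add: u_def \<gamma>_def P_def v_def Zc_def \<phi>_def)
      show "\<forall>z\<in>ball 0 2. ((\<lambda>t. u (z + of_real t)) has_real_derivative ux z) (at 0)"
        using chain1[OF b23, of _ 1] by (auto simp: u_def ux_def intro!: DERIV_minus)
      show "\<forall>z\<in>ball 0 2. ((\<lambda>t. uy (z + of_real t * \<i>)) has_real_derivative uyy z) (at 0)"
      proof
        fix z :: complex assume z: "z \<in> ball 0 2"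
        have "((\<lambda>s. - D (\<gamma> (z + of_real s * \<i>)) (\<i> *s \<gamma>1 (z + of_real s * \<i>))) has_real_derivative
           - (H (\<gamma> z) (\<i> *s \<gamma>1 z) (\<i> *s \<gamma>1 z) + D (\<gamma> z) (\<i> *s (\<i> *s \<gamma>2 z)))) (at 0)"
          by (rule DERIV_minus[OF chain2[OF b23[OF z], of \<i> \<i>]]) simp
        then show "((\<lambda>t. uy (z + of_real t * \<i>)) has_real_derivative uyy z) (at 0)"
          unfolding uy_def uyy_def .
      qed
      show "\<forall>z\<in>ball 0 2. ((\<lambda>t. u (z + of_real t * \<i>)) has_real_derivative uy z) (at 0)"
        using chain1[OF b23, of _ \<i>] by (auto simp: u_def uy_def intro!: DERIV_minus)
      show "\<forall>z\<in>ball 0 2. ((\<lambda>t. ux (z + of_real t)) has_real_derivative uxx z) (at 0)"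
      proof
        fix z :: complex assume z: "z \<in> ball 0 2"
        have "((\<lambda>s. - D (\<gamma> (z + of_real s * 1)) (1 *s \<gamma>1 (z + of_real s * 1))) has_real_derivative
           - (H (\<gamma> z) (1 *s \<gamma>1 z) (1 *s \<gamma>1 z) + D (\<gamma> z) (1 *s (1 *s \<gamma>2 z)))) (at 0)"
          by (rule DERIV_minus[OF chain2[OF b23[OF z], of 1 1]]) simp
        then show "((\<lambda>t. ux (z + of_real t)) has_real_derivative uxx z) (at 0)"
          unfolding ux_def uxx_def by simp
      qed
      show "\<forall>z\<in>ball 0 2. uxx z + uyy z \<le> C * u z + C * (\<bar>ux z\<bar> + \<bar>uy z\<bar>)"
      proof
        fix z :: complex assume z: "z \<in> ball 0 2"
        have z3: "cmod z < 3" using z by simp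
        have qU: "\<gamma> z \<in> U" using \<gamma>U[OF z3] by simp
        have ii2: "\<i> *s (\<i> *s w) = (-1) *\<^sub>R w" for w :: "complex^2"
          by (simp add: vec_eq_iff)
        have sum: "uxx z + uyy z = - Lam H (\<gamma> z) (\<gamma>1 z)"
          unfolding uxx_def uyy_def Lam_def ii2 D_scale[OF qU] by simp
        have W: "nn (\<gamma>1 z) \<le> B" using B z by simp
        have W0: "nn (\<gamma>1 z) \<ge> 0" by (rule nn_nonneg)
        have uz: "\<bar>\<rho> (\<gamma> z)\<bar> = u z" "u z \<ge> 0"
          using le0[of "P z"] Pball[OF z3] inD by (auto simp: u_def \<gamma>_def)
        have G: "\<bar>D (\<gamma> z) (\<gamma>1 z)\<bar> + \<bar>D (\<gamma> z) (\<i> *s \<gamma>1 z)\<bar> = \<bar>ux z\<bar> + \<bar>uy z\<bar>"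
          by (simp add: ux_def uy_def)
        have "uxx z + uyy z \<le> Kf * u z * (nn (\<gamma>1 z))\<^sup>2 + Kg * (\<bar>ux z\<bar> + \<bar>uy z\<bar>) * nn (\<gamma>1 z)"
          using est[OF \<gamma>U(1)[OF z3], of "\<gamma>1 z"] unfolding sum uz(1) G .
        also have "\<dots> \<le> \<bar>Kf\<bar> * u z * B\<^sup>2 + \<bar>Kg\<bar> * (\<bar>ux z\<bar> + \<bar>uy z\<bar>) * B"
        proof (rule add_mono)
          have "Kf * u z * (nn (\<gamma>1 z))\<^sup>2 \<le> \<bar>Kf\<bar> * u z * (nn (\<gamma>1 z))\<^sup>2"
            using uz(2) by (intro mult_right_mono) auto
          also have "\<dots> \<le> \<bar>Kf\<bar> * u z * B\<^sup>2"
            using uz(2) W W0 by (intro mult_left_mono power_mono) auto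
          finally show "Kf * u z * (nn (\<gamma>1 z))\<^sup>2 \<le> \<bar>Kf\<bar> * u z * B\<^sup>2" .
          have "Kg * (\<bar>ux z\<bar> + \<bar>uy z\<bar>) * nn (\<gamma>1 z) \<le> \<bar>Kg\<bar> * (\<bar>ux z\<bar> + \<bar>uy z\<bar>) * nn (\<gamma>1 z)"
            using W0 by (intro mult_right_mono) auto
          also have "\<dots> \<le> \<bar>Kg\<bar> * (\<bar>ux z\<bar> + \<bar>uy z\<bar>) * B"
            using W by (intro mult_left_mono) auto
          finally show "Kg * (\<bar>ux z\<bar> + \<bar>uy z\<bar>) * nn (\<gamma>1 z) \<le> \<bar>Kg\<bar> * (\<bar>ux z\<bar> + \<bar>uy z\<bar>) * B" .
        qed
        also have "\<dots> \<le> C * u z + C * (\<bar>ux z\<bar> + \<bar>uy z\<bar>)"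
        proof -
          have "\<bar>Kf\<bar> * u z * B\<^sup>2 \<le> C * u z"
            using uz(2) B0 by (simp add: C_def algebra_simps mult_left_mono)
          moreover have "\<bar>Kg\<bar> * (\<bar>ux z\<bar> + \<bar>uy z\<bar>) * B \<le> C * (\<bar>ux z\<bar> + \<bar>uy z\<bar>)"
            using B0 by (simp add: C_def algebra_simps mult_left_mono)
          ultimately show ?thesis by linarith
        qed
        finally show "uxx z + uyy z \<le> C * u z + C * (\<bar>ux z\<bar> + \<bar>uy z\<bar>)" .
      qed
    qed
  qed
  show ?thesis
  proof (rule exI[of _ "\<delta>/4"], intro conjI ballI)
    show "\<delta>/4 > 0" using \<delta> by simp
    fix y assume y: "y \<in> ball z0 (\<delta>/4)"
    then have "y \<in> ball z0 \<delta>" using \<delta> by auto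
    then show "y \<in> Dh" by (rule inD)
    show "\<rho> (g y) = 0" using main[OF y] by (simp add: \<phi>_def)
  qed
qed

end

theorem lemma3p2:
  fixes D U Dh :: "(complex^2) set" and m k0 :: nat and \<rho> :: "nat \<Rightarrow> complex^2 \<Rightarrow> real"
    and g :: "complex^2 \<Rightarrow> complex^2"
  assumes "bounded D" "open D" "connected D"
    and "pw_smooth_levi_flat D U m \<rho>"
    and "k0 < m"
    and "open Dh" "connected Dh" "Dh \<subseteq> D"
    and "holo_map_on Dh g"
    and "g ` Dh \<subseteq> frontier D"
    and "g ` Dh \<inter> {q\<in>U. \<rho> k0 q = 0} \<noteq> {}"
  shows "g ` Dh \<subseteq> {q\<in>U. \<rho> k0 q = 0}"
proof -
  from assms(4) have openU: "open U" and clU: "closure D \<subseteq> U"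
    and smooth: "\<forall>k<m. smooth_on U (\<rho> k)" and Deq: "D = {q\<in>U. \<forall>k<m. \<rho> k q < 0}"
    and wedge: "\<forall>K q. K \<subseteq> {..<m} \<and> q \<in> U \<and> (\<forall>k\<in>K. \<rho> k q = 0) \<longrightarrow>
        (\<forall>c::nat\<Rightarrow>real. (\<forall>v. (\<Sum>k\<in>K. c k * frechet_derivative (\<rho> k) (at q) v) = 0)
             \<longrightarrow> (\<forall>k\<in>K. c k = 0))"
    and lf: "\<forall>k<m. levi_flat U (\<rho> k)"
    unfolding pw_smooth_levi_flat_def by blast+
  obtain DD HH TT where smi: "sm U (\<rho> k0) DD HH TT" using sm_exists[OF openU] smooth assms(5) by blast
  interpret sm U "\<rho> k0" DD HH TT by (rule smi)
  have LFU: "levi_flat U (\<rho> k0)" using lf assms(5) by blast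
  have nz: "\<exists>v. DD p v \<noteq> 0" if p: "p \<in> U" "\<rho> k0 p = 0" for p
  proof (rule ccontr)
    assume "\<not> (\<exists>v. DD p v \<noteq> 0)"
    then have z: "DD p v = 0" for v by blast
    have fd: "frechet_derivative (\<rho> k0) (at p) = DD p" using frechet_derivative_at[OF dD[OF p(1)]] by simp
    have A: "\<forall>v. (\<Sum>k\<in>{k0}. (\<lambda>_. 1::real) k * frechet_derivative (\<rho> k) (at p) v) = 0" using z fd by simp
    have B: "{k0} \<subseteq> {..<m} \<and> p \<in> U \<and> (\<forall>k\<in>{k0}. \<rho> k p = 0)" using p assms(5) by auto
    have W: "{k0} \<subseteq> {..<m} \<and> p \<in> U \<and> (\<forall>k\<in>{k0}. \<rho> k p = 0) \<longrightarrow>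
        (\<forall>c::nat\<Rightarrow>real. (\<forall>v. (\<Sum>k\<in>{k0}. c k * frechet_derivative (\<rho> k) (at p) v) = 0)
             \<longrightarrow> (\<forall>k\<in>{k0}. c k = 0))"
      by (rule wedge[THEN spec[where x="{k0}"], THEN spec[where x=p]])
    have "\<forall>k\<in>{k0}. (\<lambda>_. 1::real) k = 0" using mp[OF spec[OF mp[OF W B], of "\<lambda>_. 1"] A] .
    then show False by simp
  qed
  have closle: "\<rho> k0 x \<le> 0" if "x \<in> closure D" for x
  proof (rule continuous_le_on_closure[OF continuous_on_subset[OF cont_rho clU] that])
    fix y assume "y \<in> D"
    then show "\<rho> k0 y \<le> 0" using Deq assms(5) by (auto intro: less_imp_le)
  qed
  have gfr: "g z \<in> closure D" if "z \<in> Dh" for z using assms(10) that by (auto simp: frontier_def)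
  have gU: "g z \<in> U" if "z \<in> Dh" for z using gfr[OF that] clU by blast
  have le0: "\<rho> k0 (g z) \<le> 0" if "z \<in> Dh" for z using closle[OF gfr[OF that]] .
  have gcont: "continuous_on Dh g"
    using assms(9) unfolding holo_map_on_def
    by (metis continuous_at_imp_continuous_on has_derivative_continuous)
  define Z where "Z = {z \<in> Dh. \<rho> k0 (g z) = 0}"
  have "continuous_on Dh (\<lambda>z. \<rho> k0 (g z))"
    by (rule continuous_on_compose2[OF cont_rho gcont]) (use gU in auto)
  then have Zcl: "closedin (top_of_set Dh) Z" unfolding Z_def by (rule continuous_closedin_preimage_constant)
  have "open Z" unfolding open_contains_ball
  proof
    fix x assume "x \<in> Z"
    then have "x \<in> Dh" "\<rho> k0 (g x) = 0" by (auto simp: Z_def)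
    from local_open[OF LFU assms(6,9) gU le0 nz this] obtain \<epsilon> where "\<epsilon> > 0" "\<forall>z\<in>ball x \<epsilon>. z \<in> Dh \<and> \<rho> k0 (g z) = 0"
      by blast
    then show "\<exists>\<epsilon>>0. ball x \<epsilon> \<subseteq> Z" by (auto simp: Z_def)
  qed
  then have Zop: "openin (top_of_set Dh) Z" by (intro open_subset) (auto simp: Z_def)
  have "Z \<noteq> {}" using assms(11) by (auto simp: Z_def)
  then have "Z = Dh" using assms(7) Zop Zcl unfolding connected_clopen by blast
  then show ?thesis using gU by (auto simp: Z_def)
qed


end
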